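(* Let $Q$ be a quiver. Elements $\Pi=\sum_{x,y,a,b\in Q}R^{xa^*}_{yb^*}\,xa^*yb^*\in\mathcal{V}^2Q$ with $R^{xa^*}_{yb^*}\in\mathbb{C}$, $R^{xa^*}_{yb^*}=-R^{yb^*}_{xa^*}$ (uniform quadratic elements), satisfying $[\Pi,\Pi]_{\mathcal V}=0$ are in one-to-one correspondence, via $\Pi\mapsto r=\sum R^{xa^*}_{yb^*}\,xa^*\otimes yb^*$, with skew-symmetric elements $r\in A_Q\otimes_BA_Q$ satisfying the associative Yang–Baxter equation $r_{12}r_{23}+r_{31}r_{12}+r_{23}r_{31}=0$ in $A_Q$.
   Context: A quiver $Q$ has vertex set $I=\{1,\dots,k\}$, arrows $Q$, head/tail maps $h,t$. The path algebra $\mathbb{C}Q$ has basis the paths (including trivial paths $e_i$), multiplied by concatenation written right to left. $B=\bigoplus_i\mathbb{C}e_i$. The double quiver $\bar Q$ has arrows $Q\cup\{a^*\}$ with $h(a^* )=t(a)$, $t(a^* )=h(a)$; $\mathbb{C}\bar Q^r$ is spanned by paths with exactly $r$ starred arrows. $\mathcal{V}Q$ is the quotient of $\mathbb{C}\bar Q$ by the span of $PR-(-1)^{pr}RP$ ($P\in\mathbb{C}\bar Q^p$, $R\in\mathbb{C}\bar Q^r$). For $w\in\bar Q$, $D_w(x_1\cdots x_n)=\sum_{i:x_i=w}(-1)^{\lambda_i\mu_i}x_{i+1}\cdots x_nx_1\cdots x_{i-1}$, $\lambda_i$ (resp. $\mu_i$) the number of starred arrows among $x_{i+1},\dots,x_n$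 (resp. $x_1,\dots,x_i$). For $\gamma\in\mathcal{V}^rQ,\delta\in\mathcal{V}^sQ$: $[\gamma,\delta]_{\mathcal V}=\sum_{a\in Q}\big(D_{a^*}(\gamma)D_a(\delta)-(-1)^{(r-1)(s-1)}D_{a^*}(\delta)D_a(\gamma)\big)$ modulo the relations. In $\Pi$ only terms for which $xa^*yb^*$ is a nonzero closed path occur. $A_Q$ is the associative algebra with basis the nonzero paths $xa^*$ ($x,a\in Q$) of $\bar Q$, with product $(xa^* )(yb^* )=\delta_{ay}\,xb^*$; it is a $B$-bimodule via left and right multiplication by idempotents $e_i$. For $r=\sum_iu_i\otimes v_i$: $r_{12}r_{23}=\sum_{i,j}u_i\otimes v_iu_j\otimes v_j$, $r_{31}r_{12}=\sum_{i,j}v_ju_i\otimes v_i\otimes u_j$, $r_{23}r_{31}=\sum_{i,j}v_j\otimes u_i\otimes v_iu_j$. $r$ is skew-symmetric if $\sum u_i\otimes v_i=-\sum v_i\otimes u_i$. *)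

theory Defs
  imports Complex_Main
begin

text \<open>An arrow of the double quiver is a pair (a, s) with a in Q; s = False is a,
  s = True is the starred arrow a*.  A path is written as a word x1 ... xn
  (leftmost letter traversed last, product right to left), represented as the
  pair (head vertex, list of letters); the pair (i, []) is the trivial path e_i.\<close>

definition dh :: "('e \<Rightarrow> 'v) \<Rightarrow> ('e \<Rightarrow> 'v) \<Rightarrow> 'e \<times> bool \<Rightarrow> 'v" where
  "dh h t w = (if snd w then t (fst w) else h (fst w))"

definition dt :: "('e \<Rightarrow> 'v) \<Rightarrow> ('e \<Rightarrow> 'v) \<Rightarrow> 'e \<times> bool \<Rightarrow> 'v" where
  "dt h t w = (if snd w then h (fst w) else t (fst w))"

type_synonym ('v, 'e) path = "'v \<times> ('e \<times> bool) list"
type_synonym ('v, 'e) elt = "('v, 'e) path \<Rightarrow> complex"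

definition valid_path :: "'v set \<Rightarrow> 'e set \<Rightarrow> ('e \<Rightarrow> 'v) \<Rightarrow> ('e \<Rightarrow> 'v) \<Rightarrow> ('v, 'e) path \<Rightarrow> bool" where
  "valid_path I Q h t p \<longleftrightarrow> fst p \<in> I \<and> fst ` set (snd p) \<subseteq> Q \<and>
     (snd p \<noteq> [] \<longrightarrow> dh h t (hd (snd p)) = fst p) \<and>
     (\<forall>k. Suc k < length (snd p) \<longrightarrow> dt h t (snd p ! k) = dh h t (snd p ! Suc k))"

definition ptail :: "('e \<Rightarrow> 'v) \<Rightarrow> ('e \<Rightarrow> 'v) \<Rightarrow> ('v, 'e) path \<Rightarrow> 'v" where
  "ptail h t p = (if snd p = [] then fst p else dt h t (last (snd p)))"

definition supp :: "('v, 'e) elt \<Rightarrow> ('v, 'e) path set" where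
  "supp f = {p. f p \<noteq> 0}"

definition is_elt :: "'v set \<Rightarrow> 'e set \<Rightarrow> ('e \<Rightarrow> 'v) \<Rightarrow> ('e \<Rightarrow> 'v) \<Rightarrow> ('v, 'e) elt \<Rightarrow> bool" where
  "is_elt I Q h t f \<longleftrightarrow> finite (supp f) \<and> (\<forall>p. f p \<noteq> 0 \<longrightarrow> valid_path I Q h t p)"

definition pvec :: "('v, 'e) path \<Rightarrow> ('v, 'e) elt" where
  "pvec p = (\<lambda>q. if q = p then 1 else 0)"

definition pmul :: "('e \<Rightarrow> 'v) \<Rightarrow> ('e \<Rightarrow> 'v) \<Rightarrow> ('v, 'e) elt \<Rightarrow> ('v, 'e) elt \<Rightarrow> ('v, 'e) elt" where
  "pmul h t f g = (\<lambda>u. \<Sum>p\<in>supp f. \<Sum>q\<in>supp g.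
      if ptail h t p = fst q \<and> (fst p, snd p @ snd q) = u then f p * g q else 0)"

definition nstar :: "('e \<times> bool) list \<Rightarrow> nat" where
  "nstar xs = length (filter snd xs)"

definition homog :: "('v, 'e) elt \<Rightarrow> nat \<Rightarrow> bool" where
  "homog f r \<longleftrightarrow> (\<forall>p. f p \<noteq> 0 \<longrightarrow> nstar (snd p) = r)"

definition rels :: "'v set \<Rightarrow> 'e set \<Rightarrow> ('e \<Rightarrow> 'v) \<Rightarrow> ('e \<Rightarrow> 'v) \<Rightarrow> ('v, 'e) elt set" where
  "rels I Q h t = {(\<lambda>u. pmul h t P R u - (-1) ^ (p * r) * pmul h t R P u) | P R p r.
      is_elt I Q h t P \<and> is_elt I Q h t R \<and> homog P p \<and> homog R r}"

definition in_cspan :: "('v, 'e) elt set \<Rightarrow> ('v, 'e) elt \<Rightarrow> bool" where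
  "in_cspan S v \<longleftrightarrow> (\<exists>(n::nat) (c::nat \<Rightarrow> complex) g. (\<forall>k<n. g k \<in> S) \<and>
      (\<forall>u. v u = (\<Sum>k<n. c k * g k u)))"

definition Vzero :: "'v set \<Rightarrow> 'e set \<Rightarrow> ('e \<Rightarrow> 'v) \<Rightarrow> ('e \<Rightarrow> 'v) \<Rightarrow> ('v, 'e) elt \<Rightarrow> bool" where
  "Vzero I Q h t v \<longleftrightarrow> in_cspan (rels I Q h t) v"

text \<open>The element of C(double Q) given by the product of the letters of a word
  (the empty product is the unit, the sum of all e_i).\<close>
definition word_elt :: "'v set \<Rightarrow> 'e set \<Rightarrow> ('e \<Rightarrow> 'v) \<Rightarrow> ('e \<Rightarrow> 'v) \<Rightarrow> ('e \<times> bool) list \<Rightarrow> ('v, 'e) elt" where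
  "word_elt I Q h t ys =
     (if ys = [] then (\<lambda>u. if snd u = [] \<and> fst u \<in> I then 1 else 0)
      else if valid_path I Q h t (dh h t (hd ys), ys) then pvec (dh h t (hd ys), ys)
      else (\<lambda>_. 0))"

text \<open>D_w on a path x1...xn (0-indexed position k corresponds to i = k+1).\<close>
definition Dpath :: "'v set \<Rightarrow> 'e set \<Rightarrow> ('e \<Rightarrow> 'v) \<Rightarrow> ('e \<Rightarrow> 'v) \<Rightarrow> 'e \<times> bool \<Rightarrow> ('v, 'e) path \<Rightarrow> ('v, 'e) elt" where
  "Dpath I Q h t w p = (\<lambda>u. \<Sum>k<length (snd p).
      if snd p ! k = w then
        (-1) ^ (nstar (drop (Suc k) (snd p)) * nstar (take (Suc k) (snd p)))
          * word_elt I Q h t (drop (Suc k) (snd p) @ take k (snd p)) u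
      else 0)"

definition Dop :: "'v set \<Rightarrow> 'e set \<Rightarrow> ('e \<Rightarrow> 'v) \<Rightarrow> ('e \<Rightarrow> 'v) \<Rightarrow> 'e \<times> bool \<Rightarrow> ('v, 'e) elt \<Rightarrow> ('v, 'e) elt" where
  "Dop I Q h t w f = (\<lambda>u. \<Sum>p\<in>supp f. f p * Dpath I Q h t w p u)"

text \<open>The bracket [gamma, delta]_V for gamma of degree r and delta of degree s
  (computed on representatives; its vanishing is tested with Vzero).\<close>
definition vbracket :: "'v set \<Rightarrow> 'e set \<Rightarrow> ('e \<Rightarrow> 'v) \<Rightarrow> ('e \<Rightarrow> 'v) \<Rightarrow> nat \<Rightarrow> nat \<Rightarrow>
    ('v, 'e) elt \<Rightarrow> ('v, 'e) elt \<Rightarrow> ('v, 'e) elt" where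
  "vbracket I Q h t r s \<gamma> \<delta> = (\<lambda>u. \<Sum>a\<in>Q.
      pmul h t (Dop I Q h t (a, True) \<gamma>) (Dop I Q h t (a, False) \<delta>) u
      - (-1) ^ ((r - 1) * (s - 1)) * pmul h t (Dop I Q h t (a, True) \<delta>) (Dop I Q h t (a, False) \<gamma>) u)"

definition closed_uq :: "('e \<Rightarrow> 'v) \<Rightarrow> ('e \<Rightarrow> 'v) \<Rightarrow> 'e \<Rightarrow> 'e \<Rightarrow> 'e \<Rightarrow> 'e \<Rightarrow> bool" where
  "closed_uq h t x a y b \<longleftrightarrow> t x = t a \<and> h a = h y \<and> t y = t b \<and> h b = h x"

text \<open>Coefficients R x a y b = R^{xa*}_{yb*}: skew, and (as in the paper) only terms
  with x a* y b* a nonzero closed path occur.\<close>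
definition uq_coeffs :: "'e set \<Rightarrow> ('e \<Rightarrow> 'v) \<Rightarrow> ('e \<Rightarrow> 'v) \<Rightarrow> ('e \<Rightarrow> 'e \<Rightarrow> 'e \<Rightarrow> 'e \<Rightarrow> complex) \<Rightarrow> bool" where
  "uq_coeffs Q h t R \<longleftrightarrow> (\<forall>x a y b. R x a y b = - R y b x a) \<and>
     (\<forall>x a y b. R x a y b \<noteq> 0 \<longrightarrow> x \<in> Q \<and> a \<in> Q \<and> y \<in> Q \<and> b \<in> Q \<and> closed_uq h t x a y b)"

definition PiR :: "'e set \<Rightarrow> ('e \<Rightarrow> 'v) \<Rightarrow> ('e \<Rightarrow> 'e \<Rightarrow> 'e \<Rightarrow> 'e \<Rightarrow> complex) \<Rightarrow> ('v, 'e) elt" where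
  "PiR Q h R = (\<lambda>u. \<Sum>x\<in>Q. \<Sum>a\<in>Q. \<Sum>y\<in>Q. \<Sum>b\<in>Q.
      R x a y b * pvec (h x, [(x, False), (a, True), (y, False), (b, True)]) u)"

text \<open>Basis of A_Q: pairs (x, a) standing for the nonzero path x a*; its left
  idempotent is e_(h x), its right idempotent is e_(h a).\<close>
definition abasis :: "'e set \<Rightarrow> ('e \<Rightarrow> 'v) \<Rightarrow> ('e \<times> 'e) set" where
  "abasis Q t = {(x, a). x \<in> Q \<and> a \<in> Q \<and> t x = t a}"

definition adm2 :: "'e set \<Rightarrow> ('e \<Rightarrow> 'v) \<Rightarrow> ('e \<Rightarrow> 'v) \<Rightarrow> 'e \<times> 'e \<Rightarrow> 'e \<times> 'e \<Rightarrow> bool" where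
  "adm2 Q h t p q \<longleftrightarrow> p \<in> abasis Q t \<and> q \<in> abasis Q t \<and> h (snd p) = h (fst q)"

type_synonym 'e tens2 = "('e \<times> 'e) \<times> ('e \<times> 'e) \<Rightarrow> complex"
type_synonym 'e tens3 = "('e \<times> 'e) \<times> ('e \<times> 'e) \<times> ('e \<times> 'e) \<Rightarrow> complex"

text \<open>Elements of A_Q \<otimes>_B A_Q, as coefficient functions w.r.t. the basis tensors.\<close>
definition is_tens2 :: "'e set \<Rightarrow> ('e \<Rightarrow> 'v) \<Rightarrow> ('e \<Rightarrow> 'v) \<Rightarrow> 'e tens2 \<Rightarrow> bool" where
  "is_tens2 Q h t r \<longleftrightarrow> (\<forall>p q. r (p, q) \<noteq> 0 \<longrightarrow> adm2 Q h t p q)"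

definition basis2 :: "'e set \<Rightarrow> ('e \<Rightarrow> 'v) \<Rightarrow> ('e \<Rightarrow> 'v) \<Rightarrow> 'e \<times> 'e \<Rightarrow> 'e \<times> 'e \<Rightarrow> 'e tens2" where
  "basis2 Q h t p q = (\<lambda>z. if z = (p, q) \<and> adm2 Q h t p q then 1 else 0)"

definition basis3 :: "'e set \<Rightarrow> ('e \<Rightarrow> 'v) \<Rightarrow> ('e \<Rightarrow> 'v) \<Rightarrow> 'e \<times> 'e \<Rightarrow> 'e \<times> 'e \<Rightarrow> 'e \<times> 'e \<Rightarrow> 'e tens3" where
  "basis3 Q h t p q s = (\<lambda>z. if z = (p, q, s) \<and> adm2 Q h t p q \<and> adm2 Q h t q s then 1 else 0)"

text \<open>Product in A_Q: (x a*)(y b*) = delta_{a y} x b*.\<close>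
definition amul_ok :: "'e \<times> 'e \<Rightarrow> 'e \<times> 'e \<Rightarrow> bool" where
  "amul_ok p q \<longleftrightarrow> snd p = fst q"

definition amul :: "'e \<times> 'e \<Rightarrow> 'e \<times> 'e \<Rightarrow> 'e \<times> 'e" where
  "amul p q = (fst p, snd q)"

definition r12r23 :: "'e set \<Rightarrow> ('e \<Rightarrow> 'v) \<Rightarrow> ('e \<Rightarrow> 'v) \<Rightarrow> 'e tens2 \<Rightarrow> 'e tens3" where
  "r12r23 Q h t r = (\<lambda>z. \<Sum>u\<in>abasis Q t. \<Sum>v\<in>abasis Q t. \<Sum>u'\<in>abasis Q t. \<Sum>v'\<in>abasis Q t.
      r (u, v) * r (u', v') *
      (if amul_ok v u' then basis3 Q h t u (amul v u') v' z else 0))"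

definition r31r12 :: "'e set \<Rightarrow> ('e \<Rightarrow> 'v) \<Rightarrow> ('e \<Rightarrow> 'v) \<Rightarrow> 'e tens2 \<Rightarrow> 'e tens3" where
  "r31r12 Q h t r = (\<lambda>z. \<Sum>u\<in>abasis Q t. \<Sum>v\<in>abasis Q t. \<Sum>u'\<in>abasis Q t. \<Sum>v'\<in>abasis Q t.
      r (u, v) * r (u', v') *
      (if amul_ok v' u then basis3 Q h t (amul v' u) v u' z else 0))"

definition r23r31 :: "'e set \<Rightarrow> ('e \<Rightarrow> 'v) \<Rightarrow> ('e \<Rightarrow> 'v) \<Rightarrow> 'e tens2 \<Rightarrow> 'e tens3" where
  "r23r31 Q h t r = (\<lambda>z. \<Sum>u\<in>abasis Q t. \<Sum>v\<in>abasis Q t. \<Sum>u'\<in>abasis Q t. \<Sum>v'\<in>abasis Q t.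
      r (u, v) * r (u', v') *
      (if amul_ok v u' then basis3 Q h t v' u (amul v u') z else 0))"

definition AYBE :: "'e set \<Rightarrow> ('e \<Rightarrow> 'v) \<Rightarrow> ('e \<Rightarrow> 'v) \<Rightarrow> 'e tens2 \<Rightarrow> bool" where
  "AYBE Q h t r \<longleftrightarrow> (\<forall>z. r12r23 Q h t r z + r31r12 Q h t r z + r23r31 Q h t r z = 0)"

definition skew_tens :: "'e set \<Rightarrow> ('e \<Rightarrow> 'v) \<Rightarrow> ('e \<Rightarrow> 'v) \<Rightarrow> 'e tens2 \<Rightarrow> bool" where
  "skew_tens Q h t r \<longleftrightarrow>
     (\<forall>z. r z = - (\<Sum>u\<in>abasis Q t. \<Sum>v\<in>abasis Q t. r (u, v) * basis2 Q h t v u z))"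

definition r_of :: "'e set \<Rightarrow> ('e \<Rightarrow> 'v) \<Rightarrow> ('e \<Rightarrow> 'v) \<Rightarrow> ('e \<Rightarrow> 'e \<Rightarrow> 'e \<Rightarrow> 'e \<Rightarrow> complex) \<Rightarrow> 'e tens2" where
  "r_of Q h t R = (\<lambda>z. \<Sum>x\<in>Q. \<Sum>a\<in>Q. \<Sum>y\<in>Q. \<Sum>b\<in>Q. R x a y b * basis2 Q h t (x, a) (y, b) z)"

end

theory Submission
  imports Defs
begin



definition rotpath :: "('e \<Rightarrow> 'v) \<Rightarrow> ('e \<Rightarrow> 'v) \<Rightarrow> ('e \<times> bool) list \<Rightarrow> ('v, 'e) path" where
  "rotpath h t ws = (dh h t (hd ws), ws)"

definition cyc :: "('e \<Rightarrow> 'v) \<Rightarrow> ('e \<Rightarrow> 'v) \<Rightarrow> ('e \<times> bool) list \<Rightarrow> bool" where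
  "cyc h t ws \<longleftrightarrow> (\<forall>i<length ws. dt h t (ws!i) = dh h t (ws ! (Suc i mod length ws)))"

definition phi :: "('e \<Rightarrow> 'v) \<Rightarrow> ('e \<Rightarrow> 'v) \<Rightarrow> (nat \<Rightarrow> complex) \<Rightarrow> ('e \<times> bool) list \<Rightarrow> ('v,'e) elt \<Rightarrow> complex" where
  "phi h t s w0 f = (\<Sum>k<length w0. s k * f (rotpath h t (rotate k w0)))"

definition goodsig :: "(nat \<Rightarrow> complex) \<Rightarrow> ('e \<times> bool) list \<Rightarrow> bool" where
  "goodsig s w0 \<longleftrightarrow> (\<forall>k<length w0. \<forall>m\<le>length w0. s k = (-1)^(nstar (take m (rotate k w0)) * nstar (drop m (rotate k w0))) * s ((k+m) mod length w0))"

lemma cyc_rotate: assumes "cyc h t ws" shows "cyc h t (rotate k ws)"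
  unfolding cyc_def
proof (intro allI impI)
  fix i assume i: "i < length (rotate k ws)"
  let ?n = "length ws"
  have n: "?n > 0" using i by (cases ws) auto
  have "rotate k ws ! i = ws ! ((k + i) mod ?n)" using i by (simp add: nth_rotate)
  moreover have "rotate k ws ! (Suc i mod length (rotate k ws)) = ws ! (Suc ((k+i) mod ?n) mod ?n)"
  proof -
    have "rotate k ws ! (Suc i mod ?n) = ws ! ((k + Suc i mod ?n) mod ?n)" using n by (simp add: nth_rotate)
    also have "(k + Suc i mod ?n) mod ?n = Suc ((k+i) mod ?n) mod ?n"
      by (simp add: mod_add_right_eq mod_Suc_eq)
    finally show ?thesis by simp
  qed
  moreover have "(k+i) mod ?n < ?n" using n by simp
  ultimately show "dt h t (rotate k ws ! i) = dh h t (rotate k ws ! (Suc i mod length (rotate k ws)))"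
    using assms unfolding cyc_def by simp
qed

lemma cyc_app: assumes "cyc h t (p @ q)" "p \<noteq> []" "q \<noteq> []"
  shows "dt h t (last p) = dh h t (hd q)" "dt h t (last q) = dh h t (hd p)"
proof -
  let ?n = "length (p @ q)"
  have 1: "length p - 1 < ?n" using assms by (cases p) auto
  have "Suc (length p - 1) mod ?n = length p" using assms by simp
  then have "dt h t ((p@q) ! (length p - 1)) = dh h t ((p@q) ! length p)"
    using assms(1) 1 unfolding cyc_def by metis
  then show "dt h t (last p) = dh h t (hd q)" using assms
    by (simp add: last_conv_nth hd_conv_nth nth_append)
  have 2: "?n - 1 < ?n" using assms by simp
  have "Suc (?n - 1) mod ?n = 0" using assms by simp
  then have "dt h t ((p@q) ! (?n - 1)) = dh h t ((p@q) ! 0)"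
    using assms(1) 2 unfolding cyc_def by metis
  moreover have "length p + length q - Suc 0 - length p = length q - Suc 0" "\<not> length p + length q - Suc 0 < length p"
    using assms by (cases q; auto)+
  ultimately show "dt h t (last q) = dh h t (hd p)" using assms
    by (simp add: last_conv_nth hd_conv_nth nth_append)
qed

lemma cyc_single: assumes "cyc h t q" "q \<noteq> []" shows "dt h t (last q) = dh h t (hd q)"
proof -
  let ?n = "length q"
  have 2: "?n - 1 < ?n" using assms by simp
  have "Suc (?n - 1) mod ?n = 0" using assms by simp
  then have "dt h t (q ! (?n - 1)) = dh h t (q ! 0)"
    using assms(1) 2 unfolding cyc_def by metis
  then show ?thesis using assms by (simp add: last_conv_nth hd_conv_nth)
qed

lemma vp_head: "valid_path I Q h t p \<Longrightarrow> snd p \<noteq> [] \<Longrightarrow> fst p = dh h t (hd (snd p))"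
  unfolding valid_path_def by simp

lemma term_eq:
  assumes cw: "cyc h t w0" and ne: "w0 \<noteq> []" and vp: "valid_path I Q h t p" and vq: "valid_path I Q h t q"
  shows "(ptail h t p = fst q \<and> (fst p, snd p @ snd q) = rotpath h t (rotate k w0)) \<longleftrightarrow>
         (ptail h t q = fst p \<and> (fst q, snd q @ snd p) = rotpath h t (rotate (k + length (snd p)) w0))"
proof -
  have rot: "snd p @ snd q = rotate k w0 \<longleftrightarrow> snd q @ snd p = rotate (k + length (snd p)) w0"
  proof
    assume A: "snd p @ snd q = rotate k w0"
    then have "rotate (length (snd p)) (snd p @ snd q) = rotate (length (snd p)) (rotate k w0)" by simp
    thus "snd q @ snd p = rotate (k + length (snd p)) w0" by (simp add: rotate_rotate add.commute rotate_append)
  next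
    assume B: "snd q @ snd p = rotate (k + length (snd p)) w0"
    have len: "length (snd p) + length (snd q) = length w0" using arg_cong[OF B, of length] by simp
    have "rotate (length (snd q)) (snd q @ snd p) = rotate (length (snd q) + (k + length (snd p))) w0"
      by (simp add: B rotate_rotate)
    also have "length (snd q) + (k + length (snd p)) = k + length w0" using len by simp
    also have "rotate (k + length w0) w0 = rotate k w0" by (metis rotate_conv_mod mod_add_self2)
    finally show "snd p @ snd q = rotate k w0" by (simp add: rotate_append)
  qed
  show ?thesis
  proof (cases "snd p @ snd q = rotate k w0")
    case False
    then show ?thesis using rot by (auto simp: rotpath_def)
  next
    case True
    have c: "cyc h t (snd p @ snd q)" using True cyc_rotate[OF cw] by simp
    have nz: "snd p @ snd q \<noteq> []" using True ne by simp
    have "(ptail h t p = fst q \<and> fst p = dh h t (hd (snd p @ snd q))) \<longleftrightarrow>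
          (ptail h t q = fst p \<and> fst q = dh h t (hd (snd q @ snd p)))"
    proof (cases "snd p = []")
      case True
      then show ?thesis using vp_head[OF vq] nz c cyc_single[of h t "snd q"] by (auto simp: ptail_def)
    next
      case pF: False
      show ?thesis
      proof (cases "snd q = []")
        case True then show ?thesis using vp_head[OF vp] pF c cyc_single[of h t "snd p"] by (auto simp: ptail_def)
      next
        case False then show ?thesis using vp_head[OF vp] vp_head[OF vq] pF cyc_app[OF c pF False]
          by (auto simp: ptail_def)
      qed
    qed
    then show ?thesis using True rot by (auto simp: rotpath_def)
  qed
qed

lemma sum_rot_reindex:
  assumes n: "(n::nat) > 0"
  shows "(\<Sum>k<n. f ((k + m) mod n)) = (\<Sum>k<n. (f k :: complex))"
proof -
  have inj: "inj_on (\<lambda>k. (k + m) mod n) {..<n}"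
  proof (rule inj_onI)
    fix k k' assume "k \<in> {..<n}" "k' \<in> {..<n}" "(k + m) mod n = (k' + m) mod n"
    then have kk: "k < n" "k' < n" and "\<exists>q1 q2. k + m + n * q1 = k' + m + n * q2"
      using nat_mod_eq_iff[of "k+m" "n" "k'+m"] by auto
    then obtain q1 q2 where "k + m + n * q1 = k' + m + n * q2" by blast
    then have "k + n * q1 = k' + n * q2" by simp
    then have "k mod n = k' mod n" using nat_mod_eq_iff by blast
    then show "k = k'" using kk by simp
  qed
  have "(\<lambda>k. (k + m) mod n) ` {..<n} \<subseteq> {..<n}" using n by auto
  from endo_inj_surj[OF finite_lessThan this inj] have im: "(\<lambda>k. (k + m) mod n) ` {..<n} = {..<n}" .
  show ?thesis using sum.reindex[OF inj, of f] im by simp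
qed

lemma pmul_eq: "pmul h t f g u = (\<Sum>p\<in>supp f. \<Sum>q\<in>supp g.
      if ptail h t p = fst q \<and> (fst p, snd p @ snd q) = u then f p * g q else 0)"
  unfolding pmul_def by simp

lemma phi_rel:
  assumes cw: "cyc h t w0" and ne: "w0 \<noteq> []" and gs: "goodsig s w0" and g: "g \<in> rels I Q h t"
  shows "phi h t s w0 g = 0"
proof -
  obtain P R pd rd where gdef: "g = (\<lambda>u. pmul h t P R u - (-1) ^ (pd * rd) * pmul h t R P u)"
    and eP: "is_elt I Q h t P" and eR: "is_elt I Q h t R" and hP: "homog P pd" and hR: "homog R rd"
    using g unfolding rels_def by blast
  let ?n = "length w0"
  let ?pi = "\<lambda>k. rotpath h t (rotate k w0)"
  let ?c = "(-1) ^ (pd * rd) :: complex"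
  define c1 where "c1 = (\<lambda>p q k. ptail h t p = fst q \<and> (fst p, snd p @ snd q) = ?pi k)"
  have fP: "finite (supp P)" and fR: "finite (supp R)" using eP eR unfolding is_elt_def by auto
  have key: "(\<Sum>k<?n. s k * (if c1 p q k then 1 else 0)) = ?c * (\<Sum>k<?n. s k * (if c1 q p k then 1 else 0))"
    if p: "p \<in> supp P" and q: "q \<in> supp R" for p q
  proof -
    have vp: "valid_path I Q h t p" and vq: "valid_path I Q h t q"
      using p q eP eR unfolding is_elt_def supp_def by blast+
    have dp: "nstar (snd p) = pd" and dq: "nstar (snd q) = rd"
      using p q hP hR unfolding homog_def supp_def by blast+
    let ?m = "length (snd p)"
    have n0: "?n > 0" using ne by simp
    have "(\<Sum>k<?n. s k * (if c1 q p k then 1 else 0)) =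
          (\<Sum>k<?n. s ((k + ?m) mod ?n) * (if c1 q p ((k + ?m) mod ?n) then 1 else 0))"
      using sum_rot_reindex[OF n0, of "\<lambda>k. s k * (if c1 q p k then 1 else 0)" ?m] by simp
    also have "?c * \<dots> = (\<Sum>k<?n. s k * (if c1 p q k then 1 else 0))"
      unfolding sum_distrib_left
    proof (rule sum.cong[OF refl])
      fix k assume k: "k \<in> {..<?n}"
      have rr: "rotate ((k + ?m) mod ?n) w0 = rotate (k + ?m) w0" by (metis rotate_conv_mod)
      have eq: "c1 p q k \<longleftrightarrow> c1 q p ((k + ?m) mod ?n)"
        unfolding c1_def rr using term_eq[OF cw ne vp vq, of k] by simp
      show "?c * (s ((k + ?m) mod ?n) * (if c1 q p ((k + ?m) mod ?n) then 1 else 0)) =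
            s k * (if c1 p q k then 1 else 0)"
      proof (cases "c1 p q k")
        case False then show ?thesis using eq by simp
      next
        case True
        then have pq: "snd p @ snd q = rotate k w0" unfolding c1_def rotpath_def by simp
        then have ml: "?m \<le> ?n" by (metis le_add1 length_append length_rotate)
        have tk: "take ?m (rotate k w0) = snd p" "drop ?m (rotate k w0) = snd q"
          using pq by (metis append_eq_conv_conj)+
        have "s k = (-1)^(nstar (take ?m (rotate k w0)) * nstar (drop ?m (rotate k w0))) * s ((k + ?m) mod ?n)"
          using gs k ml unfolding goodsig_def by simp
        then have "s k = (-1) ^ (pd * rd) * s ((k + ?m) mod ?n)" by (simp add: tk dp dq)
        moreover have "?c * ?c = 1"
          by (metis (no_types) power_add power_minus1_even mult_2 dvd_triv_left semiring_norm(88) odd_add power_mult_distrib) 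
        ultimately show ?thesis using True eq by (simp add: mult.assoc[symmetric])
      qed
    qed
    finally show ?thesis by simp
  qed
  have A: "(\<Sum>k<?n. s k * pmul h t P R (?pi k)) =
        (\<Sum>p\<in>supp P. \<Sum>q\<in>supp R. P p * R q * (\<Sum>k<?n. s k * (if c1 p q k then 1 else 0)))"
  proof -
    have "(\<Sum>k<?n. s k * pmul h t P R (?pi k)) =
      (\<Sum>k<?n. \<Sum>p\<in>supp P. \<Sum>q\<in>supp R. s k * (if c1 p q k then P p * R q else 0))"
      unfolding pmul_eq c1_def sum_distrib_left by simp
    also have "\<dots> = (\<Sum>p\<in>supp P. \<Sum>k<?n. \<Sum>q\<in>supp R. s k * (if c1 p q k then P p * R q else 0))"
      by (rule sum.swap)
    also have "\<dots> = (\<Sum>p\<in>supp P. \<Sum>q\<in>supp R. \<Sum>k<?n. s k * (if c1 p q k then P p * R q else 0))"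
      by (rule sum.cong[OF refl], rule sum.swap)
    also have "\<dots> = (\<Sum>p\<in>supp P. \<Sum>q\<in>supp R. P p * R q * (\<Sum>k<?n. s k * (if c1 p q k then 1 else 0)))"
      unfolding sum_distrib_left by (intro sum.cong refl) auto
    finally show ?thesis .
  qed
  have B: "(\<Sum>k<?n. s k * pmul h t R P (?pi k)) =
        (\<Sum>p\<in>supp P. \<Sum>q\<in>supp R. P p * R q * (\<Sum>k<?n. s k * (if c1 q p k then 1 else 0)))"
  proof -
    have "(\<Sum>k<?n. s k * pmul h t R P (?pi k)) =
      (\<Sum>k<?n. \<Sum>q\<in>supp R. \<Sum>p\<in>supp P. s k * (if c1 q p k then R q * P p else 0))"
      unfolding pmul_eq c1_def sum_distrib_left by simp
    also have "\<dots> = (\<Sum>q\<in>supp R. \<Sum>k<?n. \<Sum>p\<in>supp P. s k * (if c1 q p k then R q * P p else 0))"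
      by (rule sum.swap)
    also have "\<dots> = (\<Sum>q\<in>supp R. \<Sum>p\<in>supp P. \<Sum>k<?n. s k * (if c1 q p k then R q * P p else 0))"
      by (rule sum.cong[OF refl], rule sum.swap)
    also have "\<dots> = (\<Sum>p\<in>supp P. \<Sum>q\<in>supp R. \<Sum>k<?n. s k * (if c1 q p k then R q * P p else 0))"
      by (rule sum.swap)
    also have "\<dots> = (\<Sum>p\<in>supp P. \<Sum>q\<in>supp R. P p * R q * (\<Sum>k<?n. s k * (if c1 q p k then 1 else 0)))"
      unfolding sum_distrib_left by (intro sum.cong refl) auto
    finally show ?thesis .
  qed
  have "phi h t s w0 g = (\<Sum>k<?n. s k * pmul h t P R (?pi k)) - ?c * (\<Sum>k<?n. s k * pmul h t R P (?pi k))"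
    unfolding phi_def gdef by (simp add: right_diff_distrib sum_subtractf sum_distrib_left mult_ac)
  also have "\<dots> = 0"
  proof -
    have "(\<Sum>p\<in>supp P. \<Sum>q\<in>supp R. P p * R q * (\<Sum>k<?n. s k * (if c1 p q k then 1 else 0))) =
          (\<Sum>p\<in>supp P. \<Sum>q\<in>supp R. ?c * (P p * R q * (\<Sum>k<?n. s k * (if c1 q p k then 1 else 0))))"
      by (intro sum.cong refl) (simp add: key)
    then show ?thesis unfolding A B by (simp add: sum_distrib_left)
  qed
  finally show ?thesis .
qed

lemma phi_Vzero:
  assumes cw: "cyc h t w0" and ne: "w0 \<noteq> []" and gs: "goodsig s w0" and v: "Vzero I Q h t v"
  shows "phi h t s w0 v = 0"
proof -
  obtain N :: nat and c g where g: "\<forall>k<N. g k \<in> rels I Q h t" and vu: "\<forall>u. v u = (\<Sum>k<N. c k * g k u)"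
    using v unfolding Vzero_def in_cspan_def by blast
  let ?pi = "\<lambda>j. rotpath h t (rotate j w0)"
  have "phi h t s w0 v = (\<Sum>j<length w0. s j * (\<Sum>k<N. c k * g k (?pi j)))"
    unfolding phi_def using vu by (simp del: split_paired_All)
  also have "\<dots> = (\<Sum>j<length w0. \<Sum>k<N. c k * (s j * g k (?pi j)))"
    by (simp add: sum_distrib_left mult_ac)
  also have "\<dots> = (\<Sum>k<N. \<Sum>j<length w0. c k * (s j * g k (?pi j)))"
    by (rule sum.swap)
  also have "\<dots> = (\<Sum>k<N. c k * phi h t s w0 (g k))"
    by (simp add: phi_def sum_distrib_left)
  also have "\<dots> = 0" using phi_rel[OF cw ne gs] g by (intro sum.neutral) auto
  finally show ?thesis .
qed



lemma sum_if_out: "(\<Sum>i\<in>A. if P then f i else 0) = (if P then (\<Sum>i\<in>A. f i) else (0::'a::comm_monoid_add))"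
  by simp

lemma collapse4:
  assumes "finite Q"
  shows "(\<Sum>x'\<in>Q. \<Sum>a'\<in>Q. \<Sum>y'\<in>Q. \<Sum>b'\<in>Q. if x' = x \<and> a' = a \<and> y' = y \<and> b' = b then F x' a' y' b' else (0::complex))
     = (if x \<in> Q \<and> a \<in> Q \<and> y \<in> Q \<and> b \<in> Q then F x a y b else 0)"
proof -
  have e: "\<And>x' a' y' b'. (if x' = x \<and> a' = a \<and> y' = y \<and> b' = b then F x' a' y' b' else (0::complex)) =
     (if x' = x then if a' = a then if y' = y then if b' = b then F x a y b else 0 else 0 else 0 else 0)" by simp
  show ?thesis unfolding e using assms by (simp add: sum.delta' sum_if_out cong: if_cong)
qed

lemma rot_w4: "rotate 0 [p0,p1,p2,p3::'a] = [p0,p1,p2,p3]" "rotate 1 [p0,p1,p2,p3] = [p1,p2,p3,p0]"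
  "rotate 2 [p0,p1,p2,p3] = [p2,p3,p0,p1]" "rotate 3 [p0,p1,p2,p3] = [p3,p0,p1,p2]"
  by (simp_all add: numeral_eq_Suc rotate1_def)

lemma goodsig4: "goodsig (\<lambda>k. if k < 2 then 1 else -1) [(x,False),(a,True),(y,False),(b,True)]"
  unfolding goodsig_def
proof (intro allI impI)
  fix k m :: nat assume k: "k < length [(x,False),(a,True),(y,False),(b,True)]" and m: "m \<le> length [(x,False),(a,True),(y,False),(b,True)]"
  have k4: "k \<in> {0,1,2,3}" using k by auto
  have m4: "m \<in> {0,1,2,3,4}" using m by auto
  show "(if k < 2 then 1 else -1 :: complex) = (- 1) ^ (nstar (take m (rotate k [(x,False),(a,True),(y,False),(b,True)])) * nstar (drop m (rotate k [(x,False),(a,True),(y,False),(b,True)]))) *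
    (if (k + m) mod length [(x,False),(a,True),(y,False),(b,True)] < 2 then 1 else -1)"
    using k4 m4 by (auto simp: rot_w4 nstar_def)
qed

lemma uq_supp: "uq_coeffs Q h t R \<Longrightarrow> R x a y b \<noteq> 0 \<Longrightarrow> x \<in> Q \<and> a \<in> Q \<and> y \<in> Q \<and> b \<in> Q \<and> closed_uq h t x a y b"
  unfolding uq_coeffs_def by blast

lemma uq_skew: "uq_coeffs Q h t R \<Longrightarrow> R x a y b = - R y b x a"
  unfolding uq_coeffs_def by blast

lemma closed_adm: "closed_uq h t x a y b \<Longrightarrow> x \<in> Q \<Longrightarrow> a \<in> Q \<Longrightarrow> y \<in> Q \<Longrightarrow> b \<in> Q \<Longrightarrow>
   adm2 Q h t (x,a) (y,b) \<and> adm2 Q h t (y,b) (x,a)"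
  unfolding closed_uq_def adm2_def abasis_def by auto

lemma r_of_eq:
  assumes fQ: "finite Q" and uq: "uq_coeffs Q h t R"
  shows "r_of Q h t R ((x,a),(y,b)) = R x a y b"
proof -
  have "r_of Q h t R ((x,a),(y,b)) = (\<Sum>x'\<in>Q. \<Sum>a'\<in>Q. \<Sum>y'\<in>Q. \<Sum>b'\<in>Q.
     if x' = x \<and> a' = a \<and> y' = y \<and> b' = b then R x' a' y' b' * (if adm2 Q h t (x',a') (y',b') then 1 else 0) else 0)"
    unfolding r_of_def basis2_def by (intro sum.cong refl) auto
  also have "\<dots> = (if x \<in> Q \<and> a \<in> Q \<and> y \<in> Q \<and> b \<in> Q then R x a y b * (if adm2 Q h t (x,a) (y,b) then 1 else 0) else 0)"
    by (rule collapse4[OF fQ])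
  also have "\<dots> = R x a y b"
    using uq_supp[OF uq, of x a y b] closed_adm[of h t x a y b Q] by auto
  finally show ?thesis .
qed

lemma finite_abasis: "finite Q \<Longrightarrow> finite (abasis Q t)"
  unfolding abasis_def by (rule finite_subset[of _ "Q \<times> Q"]) auto

lemma collapse2:
  assumes "finite A"
  shows "(\<Sum>u\<in>A. \<Sum>v\<in>A. if u = p \<and> v = q then F u v else (0::complex)) = (if p \<in> A \<and> q \<in> A then F p q else 0)"
proof -
  have e: "\<And>u v. (if u = p \<and> v = q then F u v else (0::complex)) = (if u = p then if v = q then F p q else 0 else 0)" by simp
  show ?thesis unfolding e using assms by (simp add: sum.delta' sum_if_out cong: if_cong)
qed


lemma part3:
  assumes fQ: "finite Q" and r: "is_tens2 Q h t r" "skew_tens Q h t r"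
  shows "\<exists>R. uq_coeffs Q h t R \<and> r_of Q h t R = r"
proof -
  define R where "R = (\<lambda>x a y b. r ((x,a),(y,b)))"
  have sk: "r ((x,a),(y,b)) = - (if adm2 Q h t (x,a) (y,b) then r ((y,b),(x,a)) else 0)" for x a y b
  proof -
    have "r ((x,a),(y,b)) = - (\<Sum>u\<in>abasis Q t. \<Sum>v\<in>abasis Q t. r (u, v) * basis2 Q h t v u ((x,a),(y,b)))"
      using r(2) unfolding skew_tens_def by blast
    also have "(\<Sum>u\<in>abasis Q t. \<Sum>v\<in>abasis Q t. r (u, v) * basis2 Q h t v u ((x,a),(y,b)))
      = (\<Sum>u\<in>abasis Q t. \<Sum>v\<in>abasis Q t. if u = (y,b) \<and> v = (x,a) then r (u, v) * (if adm2 Q h t v u then 1 else 0) else 0)"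
      unfolding basis2_def by (intro sum.cong refl) auto
    also have "\<dots> = (if adm2 Q h t (x,a) (y,b) then r ((y,b),(x,a)) else 0)"
      by (simp add: collapse2[OF finite_abasis[OF fQ]] adm2_def)
    finally show ?thesis .
  qed
  have ad: "r ((x,a),(y,b)) \<noteq> 0 \<Longrightarrow> adm2 Q h t (x,a) (y,b)" for x a y b
    using r(1) unfolding is_tens2_def by blast
  have uq: "uq_coeffs Q h t R" unfolding uq_coeffs_def
  proof (rule conjI; intro allI impI)
    fix x a y b
    show "R x a y b = - R y b x a" unfolding R_def
      using sk[of x a y b] sk[of y b x a] by (cases "adm2 Q h t (x,a) (y,b)") auto
  next
    fix x a y b assume "R x a y b \<noteq> 0"
    then have nz: "r ((x,a),(y,b)) \<noteq> 0" unfolding R_def .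
    have nz2: "r ((y,b),(x,a)) \<noteq> 0"
    proof
      assume "r ((y,b),(x,a)) = 0" then have "r ((x,a),(y,b)) = 0" using sk[of x a y b] by simp
      with nz show False by simp
    qed
    have "adm2 Q h t (x,a) (y,b)" "adm2 Q h t (y,b) (x,a)" using ad[OF nz] ad[OF nz2] .
    then show "x \<in> Q \<and> a \<in> Q \<and> y \<in> Q \<and> b \<in> Q \<and> closed_uq h t x a y b"
      unfolding adm2_def abasis_def closed_uq_def by auto
  qed
  have "r_of Q h t R = r"
  proof
    fix z :: "('a \<times> 'a) \<times> ('a \<times> 'a)"
    obtain x a y b where z: "z = ((x,a),(y,b))" by (metis prod.collapse)
    show "r_of Q h t R z = r z" unfolding z r_of_eq[OF fQ uq] by (simp add: R_def)
  qed
  with uq show ?thesis by blast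
qed





lemma PiR_at:
  assumes fQ: "finite Q" and uq: "uq_coeffs Q h t R"
  shows "PiR Q h R (h x, [(x,False),(a,True),(y,False),(b,True)]) = R x a y b"
proof -
  have "PiR Q h R (h x, [(x,False),(a,True),(y,False),(b,True)]) =
    (\<Sum>x'\<in>Q. \<Sum>a'\<in>Q. \<Sum>y'\<in>Q. \<Sum>b'\<in>Q. if x' = x \<and> a' = a \<and> y' = y \<and> b' = b then R x' a' y' b' else 0)"
    unfolding PiR_def pvec_def by (intro sum.cong refl) auto
  also have "\<dots> = (if x \<in> Q \<and> a \<in> Q \<and> y \<in> Q \<and> b \<in> Q then R x a y b else 0)"
    by (rule collapse4[OF fQ])
  also have "\<dots> = R x a y b" using uq_supp[OF uq, of x a y b] by auto
  finally show ?thesis .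
qed

lemma PiR_star: "PiR Q h R (v, (c,True) # ws) = 0"
  unfolding PiR_def pvec_def by simp

lemma sum4: "(\<Sum>k<(4::nat). g k) = g 0 + g 1 + g 2 + (g 3 :: complex)"
  by (simp add: eval_nat_numeral)

lemma cyc4: "closed_uq h t x a y b \<Longrightarrow> cyc h t [(x,False),(a,True),(y,False),(b,True)]"
  unfolding cyc_def closed_uq_def
proof (intro allI impI)
  fix i assume c: "t x = t a \<and> h a = h y \<and> t y = t b \<and> h b = h x" and i: "i < length [(x,False),(a,True),(y,False),(b,True)]"
  then have "i \<in> {0,1,2,3}" by auto
  then show "dt h t ([(x,False),(a,True),(y,False),(b,True)] ! i) = dh h t ([(x,False),(a,True),(y,False),(b,True)] ! (Suc i mod length [(x,False),(a,True),(y,False),(b,True)]))"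
    using c by (auto simp: dt_def dh_def)
qed

lemma Vzero_zero: "Vzero I Q h t (\<lambda>u. 0)"
  unfolding Vzero_def in_cspan_def by (rule exI[of _ 0]) simp

lemma part2:
  assumes fQ: "finite Q" and uq: "uq_coeffs Q h t R" and uq': "uq_coeffs Q h t R'"
  shows "Vzero I Q h t (\<lambda>u. PiR Q h R u - PiR Q h R' u) \<longleftrightarrow> r_of Q h t R = r_of Q h t R'"
proof
  assume r: "r_of Q h t R = r_of Q h t R'"
  have "R = R'"
  proof (intro ext)
    fix x a y b show "R x a y b = R' x a y b"
      using r_of_eq[OF fQ uq, of x a y b] r_of_eq[OF fQ uq', of x a y b] r by simp
  qed
  then show "Vzero I Q h t (\<lambda>u. PiR Q h R u - PiR Q h R' u)" using Vzero_zero by simp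
next
  assume V: "Vzero I Q h t (\<lambda>u. PiR Q h R u - PiR Q h R' u)"
  have RR: "R x a y b = R' x a y b" for x a y b
  proof (rule ccontr)
    assume ne: "R x a y b \<noteq> R' x a y b"
    have cl: "closed_uq h t x a y b"
      using ne uq_supp[OF uq, of x a y b] uq_supp[OF uq', of x a y b] by (cases "R x a y b = 0") auto
    define w0 where "w0 = [(x,False),(a,True),(y,False),(b,True)]"
    define s :: "nat \<Rightarrow> complex" where "s = (\<lambda>k. if k < 2 then 1 else -1)"
    have "phi h t s w0 (\<lambda>u. PiR Q h R u - PiR Q h R' u) = 0"
      using phi_Vzero[OF cyc4[OF cl] _ goodsig4 V] unfolding w0_def s_def by simp
    moreover have "phi h t s w0 (\<lambda>u. PiR Q h R u - PiR Q h R' u) = 2 * (R x a y b - R' x a y b)"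
      unfolding phi_def w0_def s_def
      by (simp add: sum4 rot_w4 rotpath_def dh_def PiR_star PiR_at[OF fQ uq] PiR_at[OF fQ uq']
          uq_skew[OF uq, of y b x a] uq_skew[OF uq', of y b x a])
    ultimately show False using ne by simp
  qed
  show "r_of Q h t R = r_of Q h t R'"
  proof
    fix z :: "('a \<times> 'a) \<times> ('a \<times> 'a)"
    obtain x a y b where z: "z = ((x,a),(y,b))" by (metis prod.collapse)
    show "r_of Q h t R z = r_of Q h t R' z" unfolding z r_of_eq[OF fQ uq] r_of_eq[OF fQ uq'] RR ..
  qed
qed



lemma supp_sum_pvec: "supp (\<lambda>u. \<Sum>i\<in>F. c i * pvec (\<pi> i) u) \<subseteq> \<pi> ` F"
proof
  fix p assume p: "p \<in> supp (\<lambda>u. \<Sum>i\<in>F. c i * pvec (\<pi> i) u)"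
  show "p \<in> \<pi> ` F"
  proof (rule ccontr)
    assume "p \<notin> \<pi> ` F"
    then have "(\<Sum>i\<in>F. c i * pvec (\<pi> i) p) = 0" unfolding pvec_def by (intro sum.neutral) auto
    with p show False unfolding supp_def by simp
  qed
qed

lemma lin_pvec:
  assumes fF: "finite F"
  shows "(\<Sum>p\<in>\<pi> ` F. (\<Sum>i\<in>F. c i * pvec (\<pi> i) p) * H p) = (\<Sum>i\<in>F. c i * (H (\<pi> i) :: complex))"
proof -
  have "(\<Sum>p\<in>\<pi> ` F. (\<Sum>i\<in>F. c i * pvec (\<pi> i) p) * H p) = (\<Sum>p\<in>\<pi> ` F. \<Sum>i\<in>F. c i * (pvec (\<pi> i) p * H p))"
    unfolding sum_distrib_right by (simp add: mult.assoc)
  also have "\<dots> = (\<Sum>i\<in>F. \<Sum>p\<in>\<pi> ` F. c i * (pvec (\<pi> i) p * H p))" by (rule sum.swap)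
  also have "\<dots> = (\<Sum>i\<in>F. c i * H (\<pi> i))"
  proof (rule sum.cong[OF refl])
    fix i assume i: "i \<in> F"
    have "(\<Sum>p\<in>\<pi> ` F. c i * (pvec (\<pi> i) p * H p)) = (\<Sum>p\<in>\<pi> ` F. if p = \<pi> i then c i * H p else 0)"
      unfolding pvec_def by (intro sum.cong refl) auto
    also have "\<dots> = c i * H (\<pi> i)" using i fF by (simp add: sum.delta)
    finally show "(\<Sum>p\<in>\<pi> ` F. c i * (pvec (\<pi> i) p * H p)) = c i * H (\<pi> i)" .
  qed
  finally show ?thesis .
qed

lemma Dop_lin:
  assumes fF: "finite F"
  shows "Dop I Q h t w (\<lambda>u. \<Sum>i\<in>F. c i * pvec (\<pi> i) u) u = (\<Sum>i\<in>F. c i * Dpath I Q h t w (\<pi> i) u)"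
proof -
  let ?f = "\<lambda>u. \<Sum>i\<in>F. c i * pvec (\<pi> i) u"
  have "Dop I Q h t w ?f u = (\<Sum>p\<in>supp ?f. ?f p * Dpath I Q h t w p u)" unfolding Dop_def by simp
  also have "\<dots> = (\<Sum>p\<in>\<pi> ` F. ?f p * Dpath I Q h t w p u)"
    by (rule sum.mono_neutral_left) (auto simp: fF supp_sum_pvec, auto simp: supp_def)
  also have "\<dots> = (\<Sum>i\<in>F. c i * Dpath I Q h t w (\<pi> i) u)" by (rule lin_pvec[OF fF])
  finally show ?thesis .
qed

lemma pmul_lin:
  assumes fF: "finite F" and fG: "finite G"
  shows "pmul h t (\<lambda>u. \<Sum>i\<in>F. c i * pvec (\<pi> i) u) (\<lambda>u. \<Sum>j\<in>G. d j * pvec (\<rho> j) u) u =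
     (\<Sum>i\<in>F. \<Sum>j\<in>G. c i * d j * (if ptail h t (\<pi> i) = fst (\<rho> j) \<and> (fst (\<pi> i), snd (\<pi> i) @ snd (\<rho> j)) = u then 1 else 0))"
proof -
  let ?f = "\<lambda>u. \<Sum>i\<in>F. c i * pvec (\<pi> i) u"
  let ?g = "\<lambda>u. \<Sum>j\<in>G. d j * pvec (\<rho> j) u"
  let ?K = "\<lambda>p q. (if ptail h t p = fst q \<and> (fst p, snd p @ snd q) = u then 1 else 0) :: complex"
  have "pmul h t ?f ?g u = (\<Sum>p\<in>supp ?f. \<Sum>q\<in>supp ?g. ?f p * (?g q * ?K p q))"
    unfolding pmul_def by (intro sum.cong refl) auto
  also have "\<dots> = (\<Sum>p\<in>\<pi> ` F. \<Sum>q\<in>supp ?g. ?f p * (?g q * ?K p q))"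
    by (rule sum.mono_neutral_left) (auto simp: fF supp_sum_pvec, auto simp: supp_def)
  also have "\<dots> = (\<Sum>p\<in>\<pi> ` F. \<Sum>q\<in>\<rho> ` G. ?f p * (?g q * ?K p q))"
    by (intro sum.cong refl sum.mono_neutral_left) (auto simp: fG supp_sum_pvec, auto simp: supp_def)
  also have "\<dots> = (\<Sum>p\<in>\<pi> ` F. ?f p * (\<Sum>q\<in>\<rho> ` G. ?g q * ?K p q))"
    by (simp add: sum_distrib_left)
  also have "\<dots> = (\<Sum>i\<in>F. c i * (\<Sum>q\<in>\<rho> ` G. ?g q * ?K (\<pi> i) q))"
    by (rule lin_pvec[OF fF])
  also have "\<dots> = (\<Sum>i\<in>F. c i * (\<Sum>j\<in>G. d j * ?K (\<pi> i) (\<rho> j)))"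
    by (simp add: lin_pvec[OF fG])
  also have "\<dots> = (\<Sum>i\<in>F. \<Sum>j\<in>G. c i * d j * ?K (\<pi> i) (\<rho> j))"
    by (simp add: sum_distrib_left mult_ac)
  finally show ?thesis .
qed

lemma PiR_prod: "PiR Q h R = (\<lambda>u. \<Sum>i\<in>Q\<times>Q\<times>Q\<times>Q. (\<lambda>(x,a,y,b). R x a y b) i *
   pvec ((\<lambda>(x,a,y,b). (h x, [(x,False),(a,True),(y,False),(b,True)])) i) u)"
  unfolding PiR_def by (simp add: sum.cartesian_product) (intro ext sum.cong refl, auto split: prod.split)

lemma DpS: "Dpath I Q h t (a,True) (v, [(x,False),(a',True),(y,False),(b,True)]) u =
  (if a' = a then - word_elt I Q h t [(y,False),(b,True),(x,False)] u else 0) +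
  (if b = a then word_elt I Q h t [(x,False),(a',True),(y,False)] u else 0)"
  by (simp add: Dpath_def numeral_eq_Suc lessThan_Suc nstar_def)

lemma DpU: "Dpath I Q h t (a,False) (v, [(x,False),(a',True),(y,False),(b,True)]) u =
  (if x = a then word_elt I Q h t [(a',True),(y,False),(b,True)] u else 0) +
  (if y = a then - word_elt I Q h t [(b,True),(x,False),(a',True)] u else 0)"
  by (simp add: Dpath_def numeral_eq_Suc lessThan_Suc nstar_def)

lemma Dop_PiR: "finite Q \<Longrightarrow> Dop I Q h t w (PiR Q h R) u =
   (\<Sum>x\<in>Q. \<Sum>a\<in>Q. \<Sum>y\<in>Q. \<Sum>b\<in>Q. R x a y b * Dpath I Q h t w (h x, [(x,False),(a,True),(y,False),(b,True)]) u)"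
  unfolding PiR_prod by (simp add: Dop_lin sum.cartesian_product) (intro sum.cong refl, auto split: prod.split)

lemma times_if0: "f * (if c then g else 0) = (if c then f * g else (0::'a::mult_zero))"
  by simp

lemma XS:
  assumes fQ: "finite Q" and uq: "uq_coeffs Q h t R" and aQ: "a \<in> Q"
  shows "Dop I Q h t (a,True) (PiR Q h R) u =
    2 * (\<Sum>x\<in>Q. \<Sum>a'\<in>Q. \<Sum>y\<in>Q. R x a' y a * word_elt I Q h t [(x,False),(a',True),(y,False)] u)"
proof -
  let ?W = "\<lambda>x a' y. word_elt I Q h t [(x,False),(a',True),(y,False)] u"
  let ?S1 = "\<Sum>x\<in>Q. \<Sum>a'\<in>Q. \<Sum>y\<in>Q. \<Sum>b\<in>Q. R x a' y b * (if a' = a then - ?W y b x else 0)"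
  let ?S2 = "\<Sum>x\<in>Q. \<Sum>a'\<in>Q. \<Sum>y\<in>Q. \<Sum>b\<in>Q. R x a' y b * (if b = a then ?W x a' y else 0)"
  have "Dop I Q h t (a,True) (PiR Q h R) u = ?S1 + ?S2"
    unfolding Dop_PiR[OF fQ] DpS by (simp add: distrib_left sum.distrib)
  also have "?S2 = (\<Sum>x\<in>Q. \<Sum>a'\<in>Q. \<Sum>y\<in>Q. R x a' y a * ?W x a' y)"
    using aQ fQ by (simp add: times_if0 sum_if_out sum.delta sum.delta' cong: if_cong)
  also have "?S1 = (\<Sum>x\<in>Q. \<Sum>y\<in>Q. \<Sum>b\<in>Q. R x a y b * (- ?W y b x))"
    using aQ fQ by (simp add: times_if0 sum_if_out sum.delta sum.delta' cong: if_cong)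
  also have "\<dots> = (\<Sum>x\<in>Q. \<Sum>y\<in>Q. \<Sum>b\<in>Q. R y b x a * ?W y b x)"
    by (intro sum.cong refl) (simp add: uq_skew[OF uq, of _ a])
  also have "\<dots> = (\<Sum>y\<in>Q. \<Sum>x\<in>Q. \<Sum>b\<in>Q. R y b x a * ?W y b x)"
    by (rule sum.swap)
  also have "\<dots> = (\<Sum>y\<in>Q. \<Sum>b\<in>Q. \<Sum>x\<in>Q. R y b x a * ?W y b x)"
    by (intro sum.cong refl sum.swap)
  finally show ?thesis by simp
qed

lemma YS:
  assumes fQ: "finite Q" and uq: "uq_coeffs Q h t R" and aQ: "a \<in> Q"
  shows "Dop I Q h t (a,False) (PiR Q h R) u =
    2 * (\<Sum>a'\<in>Q. \<Sum>y\<in>Q. \<Sum>b\<in>Q. R a a' y b * word_elt I Q h t [(a',True),(y,False),(b,True)] u)"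
proof -
  let ?W = "\<lambda>a' y b. word_elt I Q h t [(a',True),(y,False),(b,True)] u"
  let ?S1 = "\<Sum>x\<in>Q. \<Sum>a'\<in>Q. \<Sum>y\<in>Q. \<Sum>b\<in>Q. R x a' y b * (if x = a then ?W a' y b else 0)"
  let ?S2 = "\<Sum>x\<in>Q. \<Sum>a'\<in>Q. \<Sum>y\<in>Q. \<Sum>b\<in>Q. R x a' y b * (if y = a then - ?W b x a' else 0)"
  have "Dop I Q h t (a,False) (PiR Q h R) u = ?S1 + ?S2"
    unfolding Dop_PiR[OF fQ] DpU by (simp add: distrib_left sum.distrib)
  also have "?S1 = (\<Sum>a'\<in>Q. \<Sum>y\<in>Q. \<Sum>b\<in>Q. R a a' y b * ?W a' y b)"
    using aQ fQ by (simp add: times_if0 sum_if_out sum.delta sum.delta' cong: if_cong)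
  also have "?S2 = (\<Sum>x\<in>Q. \<Sum>a'\<in>Q. \<Sum>b\<in>Q. R x a' a b * (- ?W b x a'))"
    using aQ fQ by (simp add: times_if0 sum_if_out sum.delta sum.delta' cong: if_cong)
  also have "\<dots> = (\<Sum>x\<in>Q. \<Sum>a'\<in>Q. \<Sum>b\<in>Q. R a b x a' * ?W b x a')"
    by (intro sum.cong refl) (simp add: uq_skew[OF uq, of _ _ a])
  also have "\<dots> = (\<Sum>x\<in>Q. \<Sum>b\<in>Q. \<Sum>a'\<in>Q. R a b x a' * ?W b x a')"
    by (intro sum.cong refl sum.swap)
  also have "\<dots> = (\<Sum>b\<in>Q. \<Sum>x\<in>Q. \<Sum>a'\<in>Q. R a b x a' * ?W b x a')"
    by (rule sum.swap)
  finally show ?thesis by simp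
qed

lemma word_pvec: "ys \<noteq> [] \<Longrightarrow> valid_path I Q h t (dh h t (hd ys), ys) \<Longrightarrow> word_elt I Q h t ys = pvec (dh h t (hd ys), ys)"
  unfolding word_elt_def by simp

lemma chain_cons: "(\<forall>k. Suc k < length (a # b # ws) \<longrightarrow> f ((a#b#ws)!k) = g ((a#b#ws)!Suc k)) \<longleftrightarrow>
   f a = g b \<and> (\<forall>k. Suc k < length (b#ws) \<longrightarrow> f ((b#ws)!k) = g ((b#ws)!Suc k))"
  apply (rule iffI)
   apply (intro conjI allI impI)
    apply (drule spec[of _ 0]) apply simp
   apply (drule_tac x="Suc k" in spec) apply simp
  apply (intro allI impI) apply (case_tac k) apply auto
  done

lemma chain_one: "(\<forall>k. Suc k < length [a] \<longrightarrow> P k) \<longleftrightarrow> True" by simp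

lemma valid3a: "closed_uq h t x a y b \<Longrightarrow> x \<in> Q \<Longrightarrow> a \<in> Q \<Longrightarrow> y \<in> Q \<Longrightarrow> h ` Q \<subseteq> I \<Longrightarrow>
   valid_path I Q h t (h x, [(x,False),(a,True),(y,False)])"
  unfolding valid_path_def closed_uq_def by (simp only: snd_conv fst_conv chain_cons chain_one) (auto simp: dh_def dt_def)

lemma valid3b: "closed_uq h t x a y b \<Longrightarrow> b \<in> Q \<Longrightarrow> a \<in> Q \<Longrightarrow> y \<in> Q \<Longrightarrow> t ` Q \<subseteq> I \<Longrightarrow>
   valid_path I Q h t (t a, [(a,True),(y,False),(b,True)])"
  unfolding valid_path_def closed_uq_def by (simp only: snd_conv fst_conv chain_cons chain_one) (auto simp: dh_def dt_def)

definition wT :: "('e \<Rightarrow> 'v) \<Rightarrow> ('e \<times> 'e \<times> 'e) \<times> ('e \<times> 'e \<times> 'e) \<Rightarrow> ('v, 'e) path" where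
  "wT h = (\<lambda>((x,a,y),(d,z,e)). (h x, [(x,False),(a,True),(y,False),(d,True),(z,False),(e,True)]))"

definition CT :: "'e set \<Rightarrow> ('e \<Rightarrow> 'e \<Rightarrow> 'e \<Rightarrow> 'e \<Rightarrow> complex) \<Rightarrow> ('e \<times> 'e \<times> 'e) \<times> ('e \<times> 'e \<times> 'e) \<Rightarrow> complex" where
  "CT Q R = (\<lambda>((x,a,y),(d,z,e)). \<Sum>c\<in>Q. R x a y c * R c d z e)"

lemma XS2:
  assumes fQ: "finite Q" and uq: "uq_coeffs Q h t R" and aQ: "a \<in> Q" and hI: "h ` Q \<subseteq> I"
  shows "Dop I Q h t (a,True) (PiR Q h R) = (\<lambda>u. \<Sum>i\<in>Q\<times>Q\<times>Q. (\<lambda>(x,a',y). 2 * R x a' y a) i *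
     pvec ((\<lambda>(x,a',y). (h x, [(x,False),(a',True),(y,False)])) i) u)"
proof
  fix u
  have "Dop I Q h t (a,True) (PiR Q h R) u = 2 * (\<Sum>x\<in>Q. \<Sum>a'\<in>Q. \<Sum>y\<in>Q. R x a' y a * word_elt I Q h t [(x,False),(a',True),(y,False)] u)"
    by (rule XS[OF fQ uq aQ])
  also have "\<dots> = 2 * (\<Sum>x\<in>Q. \<Sum>a'\<in>Q. \<Sum>y\<in>Q. R x a' y a * pvec (h x, [(x,False),(a',True),(y,False)]) u)"
  proof -
    have eq: "R x a' y a * word_elt I Q h t [(x,False),(a',True),(y,False)] u = R x a' y a * pvec (h x, [(x,False),(a',True),(y,False)]) u"
      if "x \<in> Q" "a' \<in> Q" "y \<in> Q" for x a' y
    proof (cases "R x a' y a = 0")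
      case False
      then have "closed_uq h t x a' y a" using uq_supp[OF uq, of x a' y a] by simp
      then have "valid_path I Q h t (h x, [(x,False),(a',True),(y,False)])" using valid3a[OF _ that hI] by simp
      then show ?thesis using word_pvec[of "[(x,False),(a',True),(y,False)]" I Q h t] by (simp add: dh_def)
    qed simp
    show ?thesis by (intro arg_cong[where f="(*) 2"] sum.cong refl) (rule eq; assumption)
  qed
  also have "\<dots> = (\<Sum>i\<in>Q\<times>Q\<times>Q. (\<lambda>(x,a',y). 2 * R x a' y a) i *
     pvec ((\<lambda>(x,a',y). (h x, [(x,False),(a',True),(y,False)])) i) u)"
    unfolding sum_distrib_left sum.cartesian_product by (intro sum.cong refl) (simp add: split_beta)
  finally show "Dop I Q h t (a,True) (PiR Q h R) u = \<dots>" .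
qed

lemma YS2:
  assumes fQ: "finite Q" and uq: "uq_coeffs Q h t R" and aQ: "a \<in> Q" and tI: "t ` Q \<subseteq> I"
  shows "Dop I Q h t (a,False) (PiR Q h R) = (\<lambda>u. \<Sum>j\<in>Q\<times>Q\<times>Q. (\<lambda>(a',y,b). 2 * R a a' y b) j *
     pvec ((\<lambda>(a',y,b). (t a', [(a',True),(y,False),(b,True)])) j) u)"
proof
  fix u
  have "Dop I Q h t (a,False) (PiR Q h R) u = 2 * (\<Sum>a'\<in>Q. \<Sum>y\<in>Q. \<Sum>b\<in>Q. R a a' y b * word_elt I Q h t [(a',True),(y,False),(b,True)] u)"
    by (rule YS[OF fQ uq aQ])
  also have "\<dots> = 2 * (\<Sum>a'\<in>Q. \<Sum>y\<in>Q. \<Sum>b\<in>Q. R a a' y b * pvec (t a', [(a',True),(y,False),(b,True)]) u)"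
  proof -
    have eq: "R a a' y b * word_elt I Q h t [(a',True),(y,False),(b,True)] u = R a a' y b * pvec (t a', [(a',True),(y,False),(b,True)]) u"
      if "b \<in> Q" "a' \<in> Q" "y \<in> Q" for b a' y
    proof (cases "R a a' y b = 0")
      case False
      then have "closed_uq h t a a' y b" using uq_supp[OF uq, of a a' y b] by simp
      then have "valid_path I Q h t (t a', [(a',True),(y,False),(b,True)])" using valid3b[OF _ that tI] by simp
      then show ?thesis using word_pvec[of "[(a',True),(y,False),(b,True)]" I Q h t] by (simp add: dh_def)
    qed simp
    show ?thesis by (intro arg_cong[where f="(*) 2"] sum.cong refl) (rule eq; assumption)
  qed
  also have "\<dots> = (\<Sum>j\<in>Q\<times>Q\<times>Q. (\<lambda>(a',y,b). 2 * R a a' y b) j *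
     pvec ((\<lambda>(a',y,b). (t a', [(a',True),(y,False),(b,True)])) j) u)"
    unfolding sum_distrib_left sum.cartesian_product by (intro sum.cong refl) (simp add: split_beta)
  finally show "Dop I Q h t (a,False) (PiR Q h R) u = \<dots>" .
qed

lemma bracket_eq:
  assumes fQ: "finite Q" and uq: "uq_coeffs Q h t R" and hI: "h ` Q \<subseteq> I" and tI: "t ` Q \<subseteq> I"
  shows "vbracket I Q h t 2 2 (PiR Q h R) (PiR Q h R) =
     (\<lambda>u. \<Sum>T\<in>(Q\<times>Q\<times>Q)\<times>(Q\<times>Q\<times>Q). 8 * CT Q R T * pvec (wT h T) u)"
proof
  fix u
  let ?Q3 = "Q\<times>Q\<times>Q"
  define F where "F a i j = (\<lambda>((x,a',y),(a'',z,e)). R x a' y a * R a a'' z e) (i,j) * pvec (wT h (i,j)) u" for a i j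
  have f3: "finite ?Q3" using fQ by simp
  have pm: "pmul h t (Dop I Q h t (a,True) (PiR Q h R)) (Dop I Q h t (a,False) (PiR Q h R)) u =
     (\<Sum>i\<in>?Q3. \<Sum>j\<in>?Q3. 4 * F a i j)" if aQ: "a \<in> Q" for a
    unfolding XS2[OF fQ uq aQ hI] YS2[OF fQ uq aQ tI] pmul_lin[OF f3 f3]
  proof (intro sum.cong refl)
    fix i j assume "i \<in> ?Q3" "j \<in> ?Q3"
    obtain x a' y where i: "i = (x,a',y)" by (metis prod.collapse)
    obtain a'' z e where j: "j = (a'',z,e)" by (metis prod.collapse)
    show "(\<lambda>(x,a',y). 2 * R x a' y a) i * (\<lambda>(a',y,b). 2 * R a a' y b) j *
       (if ptail h t ((\<lambda>(x,a',y). (h x, [(x,False),(a',True),(y,False)])) i) = fst ((\<lambda>(a',y,b). (t a', [(a',True),(y,False),(b,True)])) j) \<and>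
        (fst ((\<lambda>(x,a',y). (h x, [(x,False),(a',True),(y,False)])) i), snd ((\<lambda>(x,a',y). (h x, [(x,False),(a',True),(y,False)])) i) @ snd ((\<lambda>(a',y,b). (t a', [(a',True),(y,False),(b,True)])) j)) = u
        then 1 else 0) = 4 * F a i j"
    proof (cases "R x a' y a = 0 \<or> R a a'' z e = 0")
      case True then show ?thesis unfolding i j F_def by auto
    next
      case False
      then have "closed_uq h t x a' y a" "closed_uq h t a a'' z e" using uq_supp[OF uq] by blast+
      then have "t y = t a''" unfolding closed_uq_def by simp
      then show ?thesis unfolding i j F_def by (simp add: ptail_def dt_def wT_def pvec_def eq_commute[of u])
    qed
  qed
  have "vbracket I Q h t 2 2 (PiR Q h R) (PiR Q h R) u =
     (\<Sum>a\<in>Q. 2 * pmul h t (Dop I Q h t (a,True) (PiR Q h R)) (Dop I Q h t (a,False) (PiR Q h R)) u)"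
    unfolding vbracket_def by simp
  also have "\<dots> = (\<Sum>a\<in>Q. \<Sum>i\<in>?Q3. \<Sum>j\<in>?Q3. 8 * F a i j)"
    by (intro sum.cong refl) (simp add: pm sum_distrib_left)
  also have "\<dots> = (\<Sum>i\<in>?Q3. \<Sum>a\<in>Q. \<Sum>j\<in>?Q3. 8 * F a i j)" by (rule sum.swap)
  also have "\<dots> = (\<Sum>i\<in>?Q3. \<Sum>j\<in>?Q3. \<Sum>a\<in>Q. 8 * F a i j)" by (intro sum.cong refl sum.swap)
  also have "\<dots> = (\<Sum>i\<in>?Q3. \<Sum>j\<in>?Q3. 8 * CT Q R (i,j) * pvec (wT h (i,j)) u)"
  proof (intro sum.cong refl)
    fix i j assume "i \<in> ?Q3" "j \<in> ?Q3"
    obtain x a' y where i: "i = (x,a',y)" by (metis prod.collapse)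
    obtain a'' z e where j: "j = (a'',z,e)" by (metis prod.collapse)
    show "(\<Sum>a\<in>Q. 8 * F a i j) = 8 * CT Q R (i,j) * pvec (wT h (i,j)) u"
      unfolding i j F_def CT_def by (simp add: sum_distrib_left sum_distrib_right mult_ac)
  qed
  also have "\<dots> = (\<Sum>T\<in>?Q3\<times>?Q3. 8 * CT Q R T * pvec (wT h T) u)"
    by (simp add: sum.cartesian_product)
  finally show "vbracket I Q h t 2 2 (PiR Q h R) (PiR Q h R) u = (\<Sum>T\<in>?Q3\<times>?Q3. 8 * CT Q R T * pvec (wT h T) u)" .
qed





lemma sum_abasis:
  assumes fQ: "finite Q" and z: "\<And>u. u \<notin> abasis Q t \<Longrightarrow> f u = 0"
  shows "(\<Sum>u\<in>abasis Q t. f u) = (\<Sum>x\<in>Q. \<Sum>a\<in>Q. (f (x,a) :: complex))"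
proof -
  have "(\<Sum>u\<in>abasis Q t. f u) = (\<Sum>u\<in>Q\<times>Q. f u)"
    by (rule sum.mono_neutral_left) (use fQ z in \<open>auto simp: abasis_def\<close>)
  also have "\<dots> = (\<Sum>x\<in>Q. \<Sum>a\<in>Q. f (x,a))" by (simp add: sum.cartesian_product)
  finally show ?thesis .
qed

lemma sum_ab4:
  assumes fQ: "finite Q" and H: "\<And>u v u' v'. G u v u' v' \<noteq> 0 \<Longrightarrow> u \<in> abasis Q t \<and> v \<in> abasis Q t \<and> u' \<in> abasis Q t \<and> v' \<in> abasis Q t"
  shows "(\<Sum>u\<in>abasis Q t. \<Sum>v\<in>abasis Q t. \<Sum>u'\<in>abasis Q t. \<Sum>v'\<in>abasis Q t. G u v u' v') =
    (\<Sum>u1\<in>Q. \<Sum>u2\<in>Q. \<Sum>v1\<in>Q. \<Sum>v2\<in>Q. \<Sum>u1'\<in>Q. \<Sum>u2'\<in>Q. \<Sum>v1'\<in>Q. \<Sum>v2'\<in>Q.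
       (G (u1,u2) (v1,v2) (u1',u2') (v1',v2') :: complex))"
proof -
  have s4: "(\<Sum>v'\<in>abasis Q t. G u v u' v') = (\<Sum>v1'\<in>Q. \<Sum>v2'\<in>Q. G u v u' (v1',v2'))" for u v u'
    by (rule sum_abasis[OF fQ]) (use H in blast)
  have s3: "(\<Sum>u'\<in>abasis Q t. \<Sum>v1'\<in>Q. \<Sum>v2'\<in>Q. G u v u' (v1',v2')) = (\<Sum>u1'\<in>Q. \<Sum>u2'\<in>Q. \<Sum>v1'\<in>Q. \<Sum>v2'\<in>Q. G u v (u1',u2') (v1',v2'))" for u v
    by (rule sum_abasis[OF fQ]) (intro sum.neutral ballI; metis H)
  have s2: "(\<Sum>v\<in>abasis Q t. \<Sum>u1'\<in>Q. \<Sum>u2'\<in>Q. \<Sum>v1'\<in>Q. \<Sum>v2'\<in>Q. G u v (u1',u2') (v1',v2')) =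
     (\<Sum>v1\<in>Q. \<Sum>v2\<in>Q. \<Sum>u1'\<in>Q. \<Sum>u2'\<in>Q. \<Sum>v1'\<in>Q. \<Sum>v2'\<in>Q. G u (v1,v2) (u1',u2') (v1',v2'))" for u
    by (rule sum_abasis[OF fQ]) (intro sum.neutral ballI; metis H)
  have s1: "(\<Sum>u\<in>abasis Q t. \<Sum>v1\<in>Q. \<Sum>v2\<in>Q. \<Sum>u1'\<in>Q. \<Sum>u2'\<in>Q. \<Sum>v1'\<in>Q. \<Sum>v2'\<in>Q. G u (v1,v2) (u1',u2') (v1',v2')) =
     (\<Sum>u1\<in>Q. \<Sum>u2\<in>Q. \<Sum>v1\<in>Q. \<Sum>v2\<in>Q. \<Sum>u1'\<in>Q. \<Sum>u2'\<in>Q. \<Sum>v1'\<in>Q. \<Sum>v2'\<in>Q. G (u1,u2) (v1,v2) (u1',u2') (v1',v2'))"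
    by (rule sum_abasis[OF fQ]) (intro sum.neutral ballI; metis H)
  show ?thesis by (simp only: s4 s3 s2 s1)
qed

lemma part1:
  assumes fQ: "finite Q" and uq: "uq_coeffs Q h t R"
  shows "is_tens2 Q h t (r_of Q h t R) \<and> skew_tens Q h t (r_of Q h t R)"
proof
  show "is_tens2 Q h t (r_of Q h t R)" unfolding is_tens2_def
  proof (intro allI impI)
    fix p q assume "r_of Q h t R (p, q) \<noteq> 0"
    then show "adm2 Q h t p q" using r_of_eq[OF fQ uq, of "fst p" "snd p" "fst q" "snd q"]
      uq_supp[OF uq, of "fst p" "snd p" "fst q" "snd q"] closed_adm[of h t "fst p" "snd p" "fst q" "snd q" Q]
      by auto
  qed
  show "skew_tens Q h t (r_of Q h t R)" unfolding skew_tens_def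
  proof
    fix z :: "('a \<times> 'a) \<times> ('a \<times> 'a)"
    obtain x a y b where z: "z = ((x,a),(y,b))" by (metis prod.collapse)
    have "(\<Sum>u\<in>abasis Q t. \<Sum>v\<in>abasis Q t. r_of Q h t R (u, v) * basis2 Q h t v u z)
      = (\<Sum>u\<in>abasis Q t. \<Sum>v\<in>abasis Q t. if u = (y,b) \<and> v = (x,a) then r_of Q h t R (u, v) * (if adm2 Q h t v u then 1 else 0) else 0)"
      unfolding z basis2_def by (intro sum.cong refl) auto
    also have "\<dots> = (if (y,b) \<in> abasis Q t \<and> (x,a) \<in> abasis Q t then R y b x a * (if adm2 Q h t (x,a) (y,b) then 1 else 0) else 0)"
      by (simp add: collapse2[OF finite_abasis[OF fQ]] r_of_eq[OF fQ uq])
    also have "\<dots> = - R x a y b"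
      using uq_supp[OF uq, of x a y b] closed_adm[of h t x a y b Q] uq_skew[OF uq, of x a y b]
      unfolding adm2_def by auto
    finally show "r_of Q h t R z = - (\<Sum>u\<in>abasis Q t. \<Sum>v\<in>abasis Q t. r_of Q h t R (u, v) * basis2 Q h t v u z)"
      using r_of_eq[OF fQ uq] z by simp
  qed
qed


lemma R_ab: "uq_coeffs Q h t R \<Longrightarrow> R x a y b \<noteq> 0 \<Longrightarrow> (x,a) \<in> abasis Q t \<and> (y,b) \<in> abasis Q t"
  using uq_supp[of Q h t R x a y b] unfolding abasis_def closed_uq_def by auto

lemma r_of_pair: "finite Q \<Longrightarrow> uq_coeffs Q h t R \<Longrightarrow> r_of Q h t R (u,v) = R (fst u) (snd u) (fst v) (snd v)"
  using r_of_eq[of Q h t R "fst u" "snd u" "fst v" "snd v"] by simp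

lemma r_of_ab: "finite Q \<Longrightarrow> uq_coeffs Q h t R \<Longrightarrow> r_of Q h t R (u,v) \<noteq> 0 \<Longrightarrow> u \<in> abasis Q t \<and> v \<in> abasis Q t"
  using part1[of Q h t R] unfolding is_tens2_def adm2_def by blast

lemma pw12:
  assumes uq: "uq_coeffs Q h t R"
  shows "R u1 u2 v1 v2 * R u1' u2' v1' v2' * (if amul_ok (v1,v2) (u1',u2') then basis3 Q h t (u1,u2) (amul (v1,v2) (u1',u2')) (v1',v2') ((x,a),(y,d),(zz,e)) else 0) =
    (if u1 = x then (if u2 = a then (if v1 = y then (if u1' = v2 then (if u2' = d then (if v1' = zz then (if v2' = e then R x a y v2 * R v2 d zz e else 0) else 0) else 0) else 0) else 0) else 0) else 0)"
proof (cases "R u1 u2 v1 v2 = 0 \<or> R u1' u2' v1' v2' = 0")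
  case True then show ?thesis by auto
next
  case False
  then have "closed_uq h t u1 u2 v1 v2" "closed_uq h t u1' u2' v1' v2'"
    "u1 \<in> Q" "u2 \<in> Q" "v1 \<in> Q" "v2 \<in> Q" "u1' \<in> Q" "u2' \<in> Q" "v1' \<in> Q" "v2' \<in> Q"
    using uq_supp[OF uq, of u1 u2 v1 v2] uq_supp[OF uq, of u1' u2' v1' v2'] by auto
  then show ?thesis unfolding basis3_def amul_ok_def amul_def adm2_def abasis_def closed_uq_def by auto
qed

lemma r12r23_eq:
  assumes fQ: "finite Q" and uq: "uq_coeffs Q h t R"
  shows "r12r23 Q h t (r_of Q h t R) ((x,a),(y,d),(zz,e)) = CT Q R ((x,a,y),(d,zz,e))"
proof -
  have "r12r23 Q h t (r_of Q h t R) ((x,a),(y,d),(zz,e)) =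
    (\<Sum>u1\<in>Q. \<Sum>u2\<in>Q. \<Sum>v1\<in>Q. \<Sum>v2\<in>Q. \<Sum>u1'\<in>Q. \<Sum>u2'\<in>Q. \<Sum>v1'\<in>Q. \<Sum>v2'\<in>Q. R u1 u2 v1 v2 * R u1' u2' v1' v2' * (if amul_ok (v1,v2) (u1',u2') then basis3 Q h t (u1,u2) (amul (v1,v2) (u1',u2')) (v1',v2') ((x,a),(y,d),(zz,e)) else 0))"
    unfolding r12r23_def
    by (subst sum_ab4[OF fQ]) (auto simp: r_of_pair[OF fQ uq] dest: R_ab[OF uq])
  also have "\<dots> = (\<Sum>u1\<in>Q. \<Sum>u2\<in>Q. \<Sum>v1\<in>Q. \<Sum>v2\<in>Q. \<Sum>u1'\<in>Q. \<Sum>u2'\<in>Q. \<Sum>v1'\<in>Q. \<Sum>v2'\<in>Q. (if u1 = x then (if u2 = a then (if v1 = y then (if u1' = v2 then (if u2' = d then (if v1' = zz then (if v2' = e then R x a y v2 * R v2 d zz e else 0) else 0) else 0) else 0) else 0) else 0) else 0))"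
    by (simp only: pw12[OF uq])
  also have "\<dots> = CT Q R ((x,a,y),(d,zz,e))"
    using fQ uq_supp[OF uq] by (simp add: sum_if_out sum.delta sum.delta' CT_def cong: if_cong) (auto intro!: sum.neutral sum.cong simp: mult.commute; metis)
  finally show ?thesis .
qed

lemma pw31:
  assumes uq: "uq_coeffs Q h t R"
  shows "R u1 u2 v1 v2 * R u1' u2' v1' v2' * (if amul_ok (v1',v2') (u1,u2) then basis3 Q h t (amul (v1',v2') (u1,u2)) (v1,v2) (u1',u2') ((x,a),(y,d),(zz,e)) else 0) =
    (if u2 = a then (if v1 = y then (if v2 = d then (if u1' = zz then (if u2' = e then (if v1' = x then (if v2' = u1 then R u1 a y d * R zz e x u1 else 0) else 0) else 0) else 0) else 0) else 0) else 0)"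
proof (cases "R u1 u2 v1 v2 = 0 \<or> R u1' u2' v1' v2' = 0")
  case True then show ?thesis by auto
next
  case False
  then have "closed_uq h t u1 u2 v1 v2" "closed_uq h t u1' u2' v1' v2'"
    "u1 \<in> Q" "u2 \<in> Q" "v1 \<in> Q" "v2 \<in> Q" "u1' \<in> Q" "u2' \<in> Q" "v1' \<in> Q" "v2' \<in> Q"
    using uq_supp[OF uq, of u1 u2 v1 v2] uq_supp[OF uq, of u1' u2' v1' v2'] by auto
  then show ?thesis unfolding basis3_def amul_ok_def amul_def adm2_def abasis_def closed_uq_def by auto
qed

lemma r31r12_eq:
  assumes fQ: "finite Q" and uq: "uq_coeffs Q h t R"
  shows "r31r12 Q h t (r_of Q h t R) ((x,a),(y,d),(zz,e)) = CT Q R ((zz,e,x),(a,y,d))"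
proof -
  have "r31r12 Q h t (r_of Q h t R) ((x,a),(y,d),(zz,e)) =
    (\<Sum>u1\<in>Q. \<Sum>u2\<in>Q. \<Sum>v1\<in>Q. \<Sum>v2\<in>Q. \<Sum>u1'\<in>Q. \<Sum>u2'\<in>Q. \<Sum>v1'\<in>Q. \<Sum>v2'\<in>Q. R u1 u2 v1 v2 * R u1' u2' v1' v2' * (if amul_ok (v1',v2') (u1,u2) then basis3 Q h t (amul (v1',v2') (u1,u2)) (v1,v2) (u1',u2') ((x,a),(y,d),(zz,e)) else 0))"
    unfolding r31r12_def
    by (subst sum_ab4[OF fQ]) (auto simp: r_of_pair[OF fQ uq] dest: R_ab[OF uq])
  also have "\<dots> = (\<Sum>u1\<in>Q. \<Sum>u2\<in>Q. \<Sum>v1\<in>Q. \<Sum>v2\<in>Q. \<Sum>u1'\<in>Q. \<Sum>u2'\<in>Q. \<Sum>v1'\<in>Q. \<Sum>v2'\<in>Q. (if u2 = a then (if v1 = y then (if v2 = d then (if u1' = zz then (if u2' = e then (if v1' = x then (if v2' = u1 then R u1 a y d * R zz e x u1 else 0) else 0) else 0) else 0) else 0) else 0) else 0))"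
    by (simp only: pw31[OF uq])
  also have "\<dots> = CT Q R ((zz,e,x),(a,y,d))"
    using fQ uq_supp[OF uq] by (simp add: sum_if_out sum.delta sum.delta' CT_def cong: if_cong) (auto intro!: sum.neutral sum.cong simp: mult.commute; metis)
  finally show ?thesis .
qed

lemma pw23:
  assumes uq: "uq_coeffs Q h t R"
  shows "R u1 u2 v1 v2 * R u1' u2' v1' v2' * (if amul_ok (v1,v2) (u1',u2') then basis3 Q h t (v1',v2') (u1,u2) (amul (v1,v2) (u1',u2')) ((x,a),(y,d),(zz,e)) else 0) =
    (if u1 = y then (if u2 = d then (if v1 = zz then (if u1' = v2 then (if u2' = e then (if v1' = x then (if v2' = a then R y d zz v2 * R v2 e x a else 0) else 0) else 0) else 0) else 0) else 0) else 0)"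
proof (cases "R u1 u2 v1 v2 = 0 \<or> R u1' u2' v1' v2' = 0")
  case True then show ?thesis by auto
next
  case False
  then have "closed_uq h t u1 u2 v1 v2" "closed_uq h t u1' u2' v1' v2'"
    "u1 \<in> Q" "u2 \<in> Q" "v1 \<in> Q" "v2 \<in> Q" "u1' \<in> Q" "u2' \<in> Q" "v1' \<in> Q" "v2' \<in> Q"
    using uq_supp[OF uq, of u1 u2 v1 v2] uq_supp[OF uq, of u1' u2' v1' v2'] by auto
  then show ?thesis unfolding basis3_def amul_ok_def amul_def adm2_def abasis_def closed_uq_def by auto
qed

lemma r23r31_eq:
  assumes fQ: "finite Q" and uq: "uq_coeffs Q h t R"
  shows "r23r31 Q h t (r_of Q h t R) ((x,a),(y,d),(zz,e)) = CT Q R ((y,d,zz),(e,x,a))"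
proof -
  have "r23r31 Q h t (r_of Q h t R) ((x,a),(y,d),(zz,e)) =
    (\<Sum>u1\<in>Q. \<Sum>u2\<in>Q. \<Sum>v1\<in>Q. \<Sum>v2\<in>Q. \<Sum>u1'\<in>Q. \<Sum>u2'\<in>Q. \<Sum>v1'\<in>Q. \<Sum>v2'\<in>Q. R u1 u2 v1 v2 * R u1' u2' v1' v2' * (if amul_ok (v1,v2) (u1',u2') then basis3 Q h t (v1',v2') (u1,u2) (amul (v1,v2) (u1',u2')) ((x,a),(y,d),(zz,e)) else 0))"
    unfolding r23r31_def
    by (subst sum_ab4[OF fQ]) (auto simp: r_of_pair[OF fQ uq] dest: R_ab[OF uq])
  also have "\<dots> = (\<Sum>u1\<in>Q. \<Sum>u2\<in>Q. \<Sum>v1\<in>Q. \<Sum>v2\<in>Q. \<Sum>u1'\<in>Q. \<Sum>u2'\<in>Q. \<Sum>v1'\<in>Q. \<Sum>v2'\<in>Q. (if u1 = y then (if u2 = d then (if v1 = zz then (if u1' = v2 then (if u2' = e then (if v1' = x then (if v2' = a then R y d zz v2 * R v2 e x a else 0) else 0) else 0) else 0) else 0) else 0) else 0))"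
    by (simp only: pw23[OF uq])
  also have "\<dots> = CT Q R ((y,d,zz),(e,x,a))"
    using fQ uq_supp[OF uq] by (simp add: sum_if_out sum.delta sum.delta' CT_def cong: if_cong) (auto intro!: sum.neutral sum.cong simp: mult.commute; metis)
  finally show ?thesis .
qed



lemma sum_split_add: "(\<Sum>k<m+(n::nat). f k) = (\<Sum>k<m. f k) + (\<Sum>k<n. (f (m+k) :: complex))"
  by (induct n) (simp_all add: add.assoc)

lemma Vz_cong: "Vzero I Q h t f \<Longrightarrow> (\<And>u. f u = g u) \<Longrightarrow> Vzero I Q h t g"
proof -
  assume "Vzero I Q h t f" "\<And>u. f u = g u"
  then have "f = g" by auto
  then show ?thesis using \<open>Vzero I Q h t f\<close> by simp
qed

lemma Vz_add:
  assumes "Vzero I Q h t f" "Vzero I Q h t g"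
  shows "Vzero I Q h t (\<lambda>u. f u + g u)"
proof -
  obtain n1 :: nat and c1 g1 where A: "\<forall>k<n1. g1 k \<in> rels I Q h t" "\<forall>u. f u = (\<Sum>k<n1. c1 k * g1 k u)"
    using assms(1) unfolding Vzero_def in_cspan_def by blast
  obtain n2 :: nat and c2 g2 where B: "\<forall>k<n2. g2 k \<in> rels I Q h t" "\<forall>u. g u = (\<Sum>k<n2. c2 k * g2 k u)"
    using assms(2) unfolding Vzero_def in_cspan_def by blast
  define c where "c k = (if k < n1 then c1 k else c2 (k - n1))" for k
  define gg where "gg k = (if k < n1 then g1 k else g2 (k - n1))" for k
  have "\<forall>k<n1+n2. gg k \<in> rels I Q h t" using A B unfolding gg_def by auto
  moreover have "\<forall>u. f u + g u = (\<Sum>k<n1+n2. c k * gg k u)"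
    unfolding sum_split_add using A B by (simp add: c_def gg_def)
  ultimately show ?thesis unfolding Vzero_def in_cspan_def
    by (intro exI[of _ "n1+n2"] exI[of _ c] exI[of _ gg] conjI)
qed

lemma Vz_scale:
  assumes "Vzero I Q h t f"
  shows "Vzero I Q h t (\<lambda>u. a * f u)"
proof -
  obtain n1 :: nat and c1 g1 where A: "\<forall>k<n1. g1 k \<in> rels I Q h t" "\<forall>u. f u = (\<Sum>k<n1. c1 k * g1 k u)"
    using assms(1) unfolding Vzero_def in_cspan_def by blast
  have "\<forall>u. a * f u = (\<Sum>k<n1. (a * c1 k) * g1 k u)" using A by (simp add: sum_distrib_left mult_ac)
  then show ?thesis using A(1) unfolding Vzero_def in_cspan_def
    by (intro exI[of _ n1] exI[of _ "\<lambda>k. a * c1 k"] exI[of _ g1] conjI)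
qed

lemma Vz_sum:
  assumes "finite A" "\<And>i. i \<in> A \<Longrightarrow> Vzero I Q h t (F i)"
  shows "Vzero I Q h t (\<lambda>u. \<Sum>i\<in>A. F i u)"
  using assms
proof (induction A rule: finite_induct)
  case empty then show ?case using Vzero_zero by simp
next
  case (insert x A)
  then have "Vzero I Q h t (\<lambda>u. F x u + (\<Sum>i\<in>A. F i u))" by (intro Vz_add) auto
  then show ?case using insert by simp
qed

lemma Vz_rel: "g \<in> rels I Q h t \<Longrightarrow> Vzero I Q h t g"
  unfolding Vzero_def in_cspan_def by (rule exI[of _ 1], rule exI[of _ "\<lambda>_. 1"], rule exI[of _ "\<lambda>_. g"]) simp

lemma supp_pvec: "supp (pvec p) = {p}"
  unfolding supp_def pvec_def by auto

lemma elt_pvec: "valid_path I Q h t p \<Longrightarrow> is_elt I Q h t (pvec p)"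
  unfolding is_elt_def supp_pvec by (auto simp: pvec_def split: if_splits)

lemma homog_pvec: "homog (pvec p) (nstar (snd p))"
  unfolding homog_def pvec_def by auto

lemma pmul_pvec: "pmul h t (pvec p) (pvec q) u = (if ptail h t p = fst q then pvec (fst p, snd p @ snd q) u else 0)"
  unfolding pmul_def supp_pvec by (auto simp: pvec_def)

lemma Vz_swap:
  assumes "valid_path I Q h t p" "valid_path I Q h t q" "ptail h t p = fst q" "ptail h t q = fst p"
  shows "Vzero I Q h t (\<lambda>u. pvec (fst p, snd p @ snd q) u - (-1) ^ (nstar (snd p) * nstar (snd q)) * pvec (fst q, snd q @ snd p) u)"
proof -
  have "(\<lambda>u. pmul h t (pvec p) (pvec q) u - (-1) ^ (nstar (snd p) * nstar (snd q)) * pmul h t (pvec q) (pvec p) u) \<in> rels I Q h t"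
    unfolding rels_def using elt_pvec[OF assms(1)] elt_pvec[OF assms(2)] homog_pvec by blast
  then show ?thesis using assms(3,4) by (simp add: pmul_pvec Vz_rel)
qed

lemma reindex_sig:
  assumes fA: "finite A" and sA: "\<And>T. T \<in> A \<Longrightarrow> \<sigma> T \<in> A" and s3: "\<And>T. \<sigma> (\<sigma> (\<sigma> T)) = T"
  shows "(\<Sum>T\<in>A. g (\<sigma> T)) = (\<Sum>T\<in>A. (g T :: complex))"
proof -
  have inj: "inj_on \<sigma> A" by (metis inj_onI s3)
  have "\<sigma> ` A \<subseteq> A" using sA by auto
  from endo_inj_surj[OF fA this inj] have im: "\<sigma> ` A = A" .
  show ?thesis using sum.reindex[OF inj, of g] im by simp
qed

lemma span_cyc:
  assumes fA: "finite A" and sA: "\<And>T. T \<in> A \<Longrightarrow> \<sigma> T \<in> A" and s3: "\<And>T. \<sigma> (\<sigma> (\<sigma> T)) = T"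
    and B3: "\<And>T. T \<in> A \<Longrightarrow> B T + B (\<sigma> T) + B (\<sigma> (\<sigma> T)) = 0"
    and D: "\<And>T. T \<in> A \<Longrightarrow> B T \<noteq> 0 \<Longrightarrow> Vzero I Q h t (\<lambda>u. W T u - W (\<sigma> T) u) \<and> Vzero I Q h t (\<lambda>u. W (\<sigma> T) u - W (\<sigma> (\<sigma> T)) u)"
  shows "Vzero I Q h t (\<lambda>u. \<Sum>T\<in>A. B T * W T u)"
proof -
  define E where "E u = (\<Sum>T\<in>A. B T * W T u)" for u
  define E1 where "E1 u = (\<Sum>T\<in>A. B T * W (\<sigma> T) u)" for u
  define E2 where "E2 u = (\<Sum>T\<in>A. B T * W (\<sigma> (\<sigma> T)) u)" for u
  have e1: "E1 u = (\<Sum>T\<in>A. B (\<sigma> (\<sigma> T)) * W T u)" for u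
    unfolding E1_def using reindex_sig[OF fA sA s3, of "\<lambda>T. B (\<sigma> (\<sigma> T)) * W T u"] s3 by simp
  have e2: "E2 u = (\<Sum>T\<in>A. B (\<sigma> T) * W T u)" for u
  proof -
    have "(\<Sum>T\<in>A. B (\<sigma> T) * W T u) = (\<Sum>T\<in>A. B (\<sigma> (\<sigma> T)) * W (\<sigma> T) u)"
      using reindex_sig[OF fA sA s3, of "\<lambda>T. B (\<sigma> T) * W T u"] by simp
    also have "\<dots> = (\<Sum>T\<in>A. B (\<sigma> (\<sigma> (\<sigma> T))) * W (\<sigma> (\<sigma> T)) u)"
      using reindex_sig[OF fA sA s3, of "\<lambda>T. B (\<sigma> (\<sigma> T)) * W (\<sigma> T) u"] by simp
    finally show ?thesis unfolding E2_def s3 by simp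
  qed
  have z: "E u + E1 u + E2 u = 0" for u
  proof -
    have "E u + E1 u + E2 u = (\<Sum>T\<in>A. (B T + B (\<sigma> T) + B (\<sigma> (\<sigma> T))) * W T u)"
      unfolding E_def e1 e2 by (simp add: sum.distrib[symmetric] algebra_simps)
    also have "\<dots> = 0" using B3 by (intro sum.neutral) auto
    finally show ?thesis .
  qed
  have V1: "Vzero I Q h t (\<lambda>u. E u - E1 u)"
  proof -
    have "Vzero I Q h t (\<lambda>u. \<Sum>T\<in>A. B T * (W T u - W (\<sigma> T) u))"
    proof (rule Vz_sum[OF fA])
      fix T assume T: "T \<in> A"
      show "Vzero I Q h t (\<lambda>u. B T * (W T u - W (\<sigma> T) u))"
      proof (cases "B T = 0")
        case True then show ?thesis using Vzero_zero by simp
      next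
        case False then show ?thesis using D[OF T] Vz_scale by blast
      qed
    qed
    then show ?thesis by (rule Vz_cong) (simp add: E_def E1_def sum_subtractf[symmetric] algebra_simps)
  qed
  have V2: "Vzero I Q h t (\<lambda>u. E u - E2 u)"
  proof -
    have "Vzero I Q h t (\<lambda>u. \<Sum>T\<in>A. B T * ((W T u - W (\<sigma> T) u) + (W (\<sigma> T) u - W (\<sigma> (\<sigma> T)) u)))"
    proof (rule Vz_sum[OF fA])
      fix T assume T: "T \<in> A"
      show "Vzero I Q h t (\<lambda>u. B T * ((W T u - W (\<sigma> T) u) + (W (\<sigma> T) u - W (\<sigma> (\<sigma> T)) u)))"
      proof (cases "B T = 0")
        case True then show ?thesis using Vzero_zero by simp
      next
        case False
        then have "Vzero I Q h t (\<lambda>u. (W T u - W (\<sigma> T) u) + (W (\<sigma> T) u - W (\<sigma> (\<sigma> T)) u))"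
          using D[OF T] by (intro Vz_add) auto
        then show ?thesis using Vz_scale by blast
      qed
    qed
    then show ?thesis by (rule Vz_cong) (simp add: E_def E2_def sum_subtractf[symmetric] algebra_simps)
  qed
  have "Vzero I Q h t (\<lambda>u. (1/3) * ((E u - E1 u) + (E u - E2 u)))"
    using V1 V2 by (intro Vz_scale Vz_add)
  then show ?thesis
  proof (rule Vz_cong)
    fix u
    have "E u = (1/3) * ((E u - E1 u) + (E u - E2 u))" using z[of u] by (simp add: field_simps)
    then show "(1/3) * ((E u - E1 u) + (E u - E2 u)) = (\<Sum>T\<in>A. B T * W T u)" unfolding E_def by simp
  qed
qed




definition sig :: "('e \<times> 'e \<times> 'e) \<times> ('e \<times> 'e \<times> 'e) \<Rightarrow> ('e \<times> 'e \<times> 'e) \<times> ('e \<times> 'e \<times> 'e)" where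
  "sig = (\<lambda>((x,a,y),(d,z,e)). ((y,d,z),(e,x,a)))"

definition closed6 :: "('e \<Rightarrow> 'v) \<Rightarrow> ('e \<Rightarrow> 'v) \<Rightarrow> ('e \<times> 'e \<times> 'e) \<times> ('e \<times> 'e \<times> 'e) \<Rightarrow> bool" where
  "closed6 h t = (\<lambda>((x,a,y),(d,z,e)). t x = t a \<and> h a = h y \<and> t y = t d \<and> h d = h z \<and> t z = t e \<and> h e = h x)"

lemma sig3: "sig (sig (sig T)) = T"
  unfolding sig_def by (auto split: prod.split)

lemma sig_A: "T \<in> (Q\<times>Q\<times>Q)\<times>(Q\<times>Q\<times>Q) \<Longrightarrow> sig T \<in> (Q\<times>Q\<times>Q)\<times>(Q\<times>Q\<times>Q)"
  unfolding sig_def by (auto split: prod.split)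

lemma sig_closed: "closed6 h t T \<Longrightarrow> closed6 h t (sig T)"
  unfolding sig_def closed6_def by (auto split: prod.split)

lemma CT_nz:
  assumes uq: "uq_coeffs Q h t R" and nz: "CT Q R T \<noteq> 0"
  shows "T \<in> (Q\<times>Q\<times>Q)\<times>(Q\<times>Q\<times>Q) \<and> closed6 h t T"
proof -
  obtain x a y d z e where T: "T = ((x,a,y),(d,z,e))" by (metis prod.collapse)
  have "\<exists>c\<in>Q. R x a y c * R c d z e \<noteq> 0"
  proof (rule ccontr)
    assume "\<not> (\<exists>c\<in>Q. R x a y c * R c d z e \<noteq> 0)"
    then have "CT Q R T = 0" unfolding T CT_def by (simp add: sum.neutral)
    with nz show False by simp
  qed
  then obtain c where "R x a y c * R c d z e \<noteq> 0" by blast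
  then have "R x a y c \<noteq> 0" "R c d z e \<noteq> 0" by auto
  then show ?thesis using uq_supp[OF uq, of x a y c] uq_supp[OF uq, of c d z e]
    unfolding T closed6_def closed_uq_def by auto
qed

lemma AYBE_iff:
  assumes fQ: "finite Q" and uq: "uq_coeffs Q h t R"
  shows "AYBE Q h t (r_of Q h t R) \<longleftrightarrow> (\<forall>T. CT Q R T + CT Q R (sig T) + CT Q R (sig (sig T)) = 0)"
proof
  assume A: "AYBE Q h t (r_of Q h t R)"
  show "\<forall>T. CT Q R T + CT Q R (sig T) + CT Q R (sig (sig T)) = 0"
  proof
    fix T :: "('a \<times> 'a \<times> 'a) \<times> ('a \<times> 'a \<times> 'a)"
    obtain x a y d z e where T: "T = ((x,a,y),(d,z,e))" by (metis prod.collapse)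
    have "r12r23 Q h t (r_of Q h t R) ((x,a),(y,d),(z,e)) + r31r12 Q h t (r_of Q h t R) ((x,a),(y,d),(z,e))
      + r23r31 Q h t (r_of Q h t R) ((x,a),(y,d),(z,e)) = 0" using A unfolding AYBE_def by blast
    then show "CT Q R T + CT Q R (sig T) + CT Q R (sig (sig T)) = 0"
      unfolding r12r23_eq[OF fQ uq] r31r12_eq[OF fQ uq] r23r31_eq[OF fQ uq] T sig_def by (simp add: algebra_simps)
  qed
next
  assume B: "\<forall>T. CT Q R T + CT Q R (sig T) + CT Q R (sig (sig T)) = 0"
  show "AYBE Q h t (r_of Q h t R)" unfolding AYBE_def
  proof
    fix w :: "('a \<times> 'a) \<times> ('a \<times> 'a) \<times> ('a \<times> 'a)"
    obtain x a y d z e where w: "w = ((x,a),(y,d),(z,e))" by (metis prod.collapse)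
    have "CT Q R ((x,a,y),(d,z,e)) + CT Q R (sig ((x,a,y),(d,z,e))) + CT Q R (sig (sig ((x,a,y),(d,z,e)))) = 0"
      using B by blast
    then show "r12r23 Q h t (r_of Q h t R) w + r31r12 Q h t (r_of Q h t R) w + r23r31 Q h t (r_of Q h t R) w = 0"
      unfolding r12r23_eq[OF fQ uq] r31r12_eq[OF fQ uq] r23r31_eq[OF fQ uq] w sig_def by (simp add: algebra_simps)
  qed
qed

lemma Vz_diff:
  assumes TA: "T \<in> (Q\<times>Q\<times>Q)\<times>(Q\<times>Q\<times>Q)" and cl: "closed6 h t T" and hI: "h ` Q \<subseteq> I"
  shows "Vzero I Q h t (\<lambda>u. pvec (wT h T) u - pvec (wT h (sig T)) u)"
proof -
  obtain x a y d z e where T: "T = ((x,a,y),(d,z,e))" by (metis prod.collapse)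
  let ?p = "(h x, [(x,False),(a,True)])"
  let ?q = "(h y, [(y,False),(d,True),(z,False),(e,True)])"
  have c: "t x = t a" "h a = h y" "t y = t d" "h d = h z" "t z = t e" "h e = h x"
    using cl unfolding T closed6_def by auto
  have Q: "x \<in> Q" "a \<in> Q" "y \<in> Q" "d \<in> Q" "z \<in> Q" "e \<in> Q" using TA unfolding T by auto
  have vp: "valid_path I Q h t ?p" unfolding valid_path_def
    using c Q hI by (simp only: snd_conv fst_conv chain_cons chain_one) (auto simp: dh_def dt_def)
  have vq: "valid_path I Q h t ?q" unfolding valid_path_def
    using c Q hI by (simp only: snd_conv fst_conv chain_cons chain_one) (auto simp: dh_def dt_def)
  have "Vzero I Q h t (\<lambda>u. pvec (fst ?p, snd ?p @ snd ?q) u - (-1) ^ (nstar (snd ?p) * nstar (snd ?q)) * pvec (fst ?q, snd ?q @ snd ?p) u)"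
    by (rule Vz_swap[OF vp vq]) (use c in \<open>auto simp: ptail_def dt_def\<close>)
  then show ?thesis unfolding T by (simp add: wT_def sig_def nstar_def)
qed

lemma backward:
  assumes fQ: "finite Q" and uq: "uq_coeffs Q h t R" and hI: "h ` Q \<subseteq> I"
    and B: "\<forall>T. CT Q R T + CT Q R (sig T) + CT Q R (sig (sig T)) = 0"
  shows "Vzero I Q h t (\<lambda>u. \<Sum>T\<in>(Q\<times>Q\<times>Q)\<times>(Q\<times>Q\<times>Q). 8 * CT Q R T * pvec (wT h T) u)"
proof (rule span_cyc[where \<sigma> = sig])
  show "finite ((Q\<times>Q\<times>Q)\<times>(Q\<times>Q\<times>Q))" using fQ by simp
  show "\<And>T. T \<in> (Q\<times>Q\<times>Q)\<times>(Q\<times>Q\<times>Q) \<Longrightarrow> sig T \<in> (Q\<times>Q\<times>Q)\<times>(Q\<times>Q\<times>Q)" by (rule sig_A)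
  show "\<And>T. sig (sig (sig T)) = T" by (rule sig3)
  show "\<And>T. 8 * CT Q R T + 8 * CT Q R (sig T) + 8 * CT Q R (sig (sig T)) = 0"
    using B by (metis distrib_left mult_zero_right)
  fix T assume TA: "T \<in> (Q\<times>Q\<times>Q)\<times>(Q\<times>Q\<times>Q)" and nz: "8 * CT Q R T \<noteq> 0"
  then have cl: "closed6 h t T" using CT_nz[OF uq] by simp
  show "Vzero I Q h t (\<lambda>u. pvec (wT h T) u - pvec (wT h (sig T)) u) \<and>
        Vzero I Q h t (\<lambda>u. pvec (wT h (sig T)) u - pvec (wT h (sig (sig T))) u)"
    using Vz_diff[OF TA cl hI] Vz_diff[OF sig_A[OF TA] sig_closed[OF cl] hI] by simp
qed

lemma rot_w6: "rotate 0 [p0,p1,p2,p3,p4,p5::'a] = [p0,p1,p2,p3,p4,p5]"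
  "rotate 1 [p0,p1,p2,p3,p4,p5] = [p1,p2,p3,p4,p5,p0]"
  "rotate 2 [p0,p1,p2,p3,p4,p5] = [p2,p3,p4,p5,p0,p1]"
  "rotate 3 [p0,p1,p2,p3,p4,p5] = [p3,p4,p5,p0,p1,p2]"
  "rotate 4 [p0,p1,p2,p3,p4,p5] = [p4,p5,p0,p1,p2,p3]"
  "rotate 5 [p0,p1,p2,p3,p4,p5] = [p5,p0,p1,p2,p3,p4]"
  by (simp_all add: numeral_eq_Suc rotate1_def)

lemma sum6: "(\<Sum>k<(6::nat). g k) = g 0 + g 1 + g 2 + g 3 + g 4 + (g 5 :: complex)"
  by (simp add: eval_nat_numeral)

lemma nstar_split: "nstar (take m ws) + nstar (drop m ws) = nstar ws"
  unfolding nstar_def by (metis append_take_drop_id filter_append length_append)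

lemma nstar_rot: "nstar (rotate k ws) = nstar ws"
  using nstar_split[of "k mod length ws" ws] unfolding nstar_def rotate_drop_take by simp

lemma goodsig3: assumes "nstar w0 = 3" shows "goodsig (\<lambda>_. 1) w0"
  unfolding goodsig_def
proof (intro allI impI)
  fix k m
  let ?A = "nstar (take m (rotate k w0))" and ?B = "nstar (drop m (rotate k w0))"
  have "?A + ?B = 3" using nstar_split[of m "rotate k w0"] nstar_rot[of k w0] assms by simp
  then have "even ?A \<or> even ?B" by presburger
  then have "even (?A * ?B)" by auto
  then show "(1::complex) = (-1) ^ (?A * ?B) * 1" by simp
qed

lemma cyc6: assumes "closed6 h t ((x,a,y),(d,z,e))"
  shows "cyc h t [(x,False),(a,True),(y,False),(d,True),(z,False),(e,True)]"
  unfolding cyc_def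
proof (intro allI impI)
  have c: "t x = t a \<and> h a = h y \<and> t y = t d \<and> h d = h z \<and> t z = t e \<and> h e = h x"
    using assms unfolding closed6_def by simp
  fix i assume i: "i < length [(x,False),(a,True),(y,False),(d,True),(z,False),(e,True)]"
  then have "i \<in> {0,1,2,3,4,5}" by auto
  then show "dt h t ([(x,False),(a,True),(y,False),(d,True),(z,False),(e,True)] ! i) = dh h t ([(x,False),(a,True),(y,False),(d,True),(z,False),(e,True)] ! (Suc i mod length [(x,False),(a,True),(y,False),(d,True),(z,False),(e,True)]))"
    using c by (auto simp: dt_def dh_def)
qed

lemma wT_inj: "wT h T' = wT h T \<Longrightarrow> T' = T"
  unfolding wT_def by (auto split: prod.splits)

lemma br_at:
  assumes "finite A" "T0 \<in> A"
  shows "(\<Sum>T\<in>A. f T * pvec (wT h T) (wT h T0)) = (f T0 :: complex)"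
proof -
  have "(\<Sum>T\<in>A. f T * pvec (wT h T) (wT h T0)) = (\<Sum>T\<in>A. if T = T0 then f T else 0)"
    by (intro sum.cong refl) (auto simp: pvec_def dest: wT_inj)
  also have "\<dots> = f T0" using assms by simp
  finally show ?thesis .
qed

lemma br_star: "(\<Sum>T\<in>A. f T * pvec (wT h T) (v, (c,True) # ws)) = (0::complex)"
  by (intro sum.neutral) (auto simp: pvec_def wT_def split: prod.splits)

lemma forward:
  assumes fQ: "finite Q" and uq: "uq_coeffs Q h t R"
    and V: "Vzero I Q h t (\<lambda>u. \<Sum>T\<in>(Q\<times>Q\<times>Q)\<times>(Q\<times>Q\<times>Q). 8 * CT Q R T * pvec (wT h T) u)"
  shows "CT Q R T + CT Q R (sig T) + CT Q R (sig (sig T)) = 0"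
proof (cases "CT Q R T = 0 \<and> CT Q R (sig T) = 0 \<and> CT Q R (sig (sig T)) = 0")
  case True then show ?thesis by simp
next
  case False
  let ?A = "(Q\<times>Q\<times>Q)\<times>(Q\<times>Q\<times>Q)"
  have TA: "T \<in> ?A \<and> closed6 h t T"
  proof -
    consider "CT Q R T \<noteq> 0" | "CT Q R (sig T) \<noteq> 0" | "CT Q R (sig (sig T)) \<noteq> 0" using False by blast
    then show ?thesis
    proof cases
      case 1 then show ?thesis using CT_nz[OF uq, of T] by simp
    next
      case 2 then have A1: "sig T \<in> ?A" and C1: "closed6 h t (sig T)" using CT_nz[OF uq, of "sig T"] by simp_all
      have "sig (sig (sig T)) \<in> ?A" by (rule sig_A, rule sig_A, rule A1)
      moreover have "closed6 h t (sig (sig (sig T)))" by (rule sig_closed, rule sig_closed, rule C1)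
      ultimately show ?thesis by (simp only: sig3 simp_thms)
    next
      case 3 then have A1: "sig (sig T) \<in> ?A" and C1: "closed6 h t (sig (sig T))" using CT_nz[OF uq, of "sig (sig T)"] by simp_all
      have "sig (sig (sig T)) \<in> ?A" by (rule sig_A, rule A1)
      moreover have "closed6 h t (sig (sig (sig T)))" by (rule sig_closed, rule C1)
      ultimately show ?thesis by (simp only: sig3 simp_thms)
    qed
  qed
  have fA: "finite ?A" using fQ by simp
  obtain x a y d z e where T: "T = ((x,a,y),(d,z,e))" by (metis prod.collapse)
  let ?w0 = "[(x,False),(a,True),(y,False),(d,True),(z,False),(e,True)]"
  have cw: "cyc h t ?w0" by (rule cyc6) (use TA in \<open>simp add: T\<close>)
  have gs: "goodsig (\<lambda>_. 1) ?w0" by (rule goodsig3) (simp add: nstar_def)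
  have "phi h t (\<lambda>_. 1) ?w0 (\<lambda>u. \<Sum>T\<in>?A. 8 * CT Q R T * pvec (wT h T) u) = 0"
    by (rule phi_Vzero[OF cw _ gs V]) simp
  moreover have "phi h t (\<lambda>_. 1) ?w0 (\<lambda>u. \<Sum>T\<in>?A. 8 * CT Q R T * pvec (wT h T) u) =
      8 * CT Q R T + 8 * CT Q R (sig T) + 8 * CT Q R (sig (sig T))"
  proof -
    have L: "length ?w0 = 6" by simp
    have e0: "rotpath h t (rotate 0 ?w0) = wT h T" by (simp add: rotpath_def wT_def T dh_def)
    have e2: "rotpath h t (rotate 2 ?w0) = wT h (sig T)" by (simp add: rot_w6 rotpath_def wT_def T sig_def dh_def)
    have e4: "rotpath h t (rotate 4 ?w0) = wT h (sig (sig T))" by (simp add: rot_w6 rotpath_def wT_def T sig_def dh_def)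
    have e1: "rotpath h t (rotate 1 ?w0) = (dh h t (a,True), (a,True) # [(y,False),(d,True),(z,False),(e,True),(x,False)])"
      by (simp add: rot_w6 rotpath_def)
    have e3: "rotpath h t (rotate 3 ?w0) = (dh h t (d,True), (d,True) # [(z,False),(e,True),(x,False),(a,True),(y,False)])"
      by (simp add: rot_w6 rotpath_def)
    have e5: "rotpath h t (rotate 5 ?w0) = (dh h t (e,True), (e,True) # [(x,False),(a,True),(y,False),(d,True),(z,False)])"
      by (simp add: rot_w6 rotpath_def)
    have s0: "T \<in> ?A" using TA by (rule conjunct1)
    have s1: "sig T \<in> ?A" "sig (sig T) \<in> ?A" by (rule sig_A[OF s0], rule sig_A[OF sig_A[OF s0]])
    show ?thesis unfolding phi_def L sum6 e0 e1 e2 e3 e4 e5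
      by (simp only: br_at[OF fA s0] br_at[OF fA s1(1)] br_at[OF fA s1(2)] br_star) simp
  qed
  ultimately have "8 * CT Q R T + 8 * CT Q R (sig T) + 8 * CT Q R (sig (sig T)) = 0" by simp
  then have "8 * (CT Q R T + CT Q R (sig T) + CT Q R (sig (sig T))) = 0" by (simp only: distrib_left)
  then show ?thesis by (metis mult_eq_0_iff zero_neq_numeral)
qed

theorem mainTheorem5:
  fixes I :: "'v set" and Q :: "'e set" and h t :: "'e \<Rightarrow> 'v"
  assumes "finite I" and "finite Q" and "h ` Q \<subseteq> I" and "t ` Q \<subseteq> I"
  shows
    "(\<forall>R. uq_coeffs Q h t R \<longrightarrow>
         is_tens2 Q h t (r_of Q h t R) \<and> skew_tens Q h t (r_of Q h t R))
   \<and> (\<forall>R R'. uq_coeffs Q h t R \<longrightarrow> uq_coeffs Q h t R' \<longrightarrow>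
         (Vzero I Q h t (\<lambda>u. PiR Q h R u - PiR Q h R' u) \<longleftrightarrow> r_of Q h t R = r_of Q h t R'))
   \<and> (\<forall>r. is_tens2 Q h t r \<and> skew_tens Q h t r \<longrightarrow>
         (\<exists>R. uq_coeffs Q h t R \<and> r_of Q h t R = r))
   \<and> (\<forall>R. uq_coeffs Q h t R \<longrightarrow>
         (Vzero I Q h t (vbracket I Q h t 2 2 (PiR Q h R) (PiR Q h R)) \<longleftrightarrow> AYBE Q h t (r_of Q h t R)))"
proof -
  have fQ: "finite Q" by fact
  have c1: "\<forall>R. uq_coeffs Q h t R \<longrightarrow> is_tens2 Q h t (r_of Q h t R) \<and> skew_tens Q h t (r_of Q h t R)"
    using part1[OF fQ] by blast
  have c2: "\<forall>R R'. uq_coeffs Q h t R \<longrightarrow> uq_coeffs Q h t R' \<longrightarrow>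
         (Vzero I Q h t (\<lambda>u. PiR Q h R u - PiR Q h R' u) \<longleftrightarrow> r_of Q h t R = r_of Q h t R')"
    using part2[OF fQ] by blast
  have c3: "\<forall>r. is_tens2 Q h t r \<and> skew_tens Q h t r \<longrightarrow> (\<exists>R. uq_coeffs Q h t R \<and> r_of Q h t R = r)"
    using part3[OF fQ] by blast
  have c4: "Vzero I Q h t (vbracket I Q h t 2 2 (PiR Q h R) (PiR Q h R)) \<longleftrightarrow> AYBE Q h t (r_of Q h t R)"
    if uq: "uq_coeffs Q h t R" for R
  proof -
    have "Vzero I Q h t (vbracket I Q h t 2 2 (PiR Q h R) (PiR Q h R)) \<longleftrightarrow>
      Vzero I Q h t (\<lambda>u. \<Sum>T\<in>(Q\<times>Q\<times>Q)\<times>(Q\<times>Q\<times>Q). 8 * CT Q R T * pvec (wT h T) u)"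
      by (simp only: bracket_eq[OF fQ uq assms(3) assms(4)])
    also have "\<dots> \<longleftrightarrow> (\<forall>T. CT Q R T + CT Q R (sig T) + CT Q R (sig (sig T)) = 0)"
      using forward[OF fQ uq] backward[OF fQ uq assms(3)] by blast
    also have "\<dots> \<longleftrightarrow> AYBE Q h t (r_of Q h t R)" using AYBE_iff[OF fQ uq] by simp
    finally show ?thesis .
  qed
  show ?thesis using c1 c2 c3 c4 by blast
qed


end
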